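(* Let $f:(\mathbb{C}^3,0)\to(\mathbb{C}^3,0)$ be a half corner $$f(x,y,z)=(x+z^c(x+P),\; y+z^{c+1}(\beta+Q),\; z+z^{c+2}R),$$ with $c\in\mathbb{N}^*$, $\beta\in\mathbb{C}$, $P\in\mathfrak{m}^2$, $Q\in\mathfrak{m}$, $R$ holomorphic. Its singular directions are: - $[1:0:0]$ (exceptional); - $[0:1:0]$ (exceptional); - when $f$ is non-simple, $[0:y_0:1]$ for all $y_0\in\mathbb{C}$ (non-exceptional and degenerate). Let $\tilde f$ be the lift of $f$ to the blow-up of the origin. Then: - $\tilde f$ is a simple corner at $[1:0:0]$; - $\tilde f$ is a spinning corner at $[0:1:0]$; - if $f$ is non-simple, $\tilde f$ is a half corner at $[0:y_0:1]$ for every $y_0\in\mathbb{C}$.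
   Context: $\mathfrak{m}$ is the maximal ideal at $0$. The half corner is simple if $\beta\neq0$ and non-simple if $\beta=0$. Singular directions are taken with respect to $\ell=z^c$: $v$ is singular if $H_\ell(v)=\lambda v$, where $H_\ell$ is the lowest-degree homogeneous part of $\ell^{-1}(f-\mathrm{id})$, and degenerate if $\lambda=0$. A direction is exceptional if it is tangent to $\{z=0\}$. The germ types are defined up to local coordinate change: - Half corner: of the displayed form. - Simple corner: $(x+x^ay^bz^c\,x(\lambda+P),\; y+x^ay^bz^c\,y(\mu+Q),\; z+x^ay^bz^c\,R)$, with $a,b\in\mathbb{N}^*$, $c\in\mathbb{N}$, $\lambda\ne0$, $\mu\notin\lambda\mathbb{Q}_{>0}$, $P,Q,R\in\mathfrak{m}$, and $z\mid R$ if $c>0$. - Spinning corner: $(x+y^bz^c(x+P),\; y+y^{b+1}z^cQ,\; z+y^bz^{c+1}R)$, with $b,c\in\mathbb{N}^*$, $P\in\mathfrak{m}^2$, $Q,R\in\mathfrak{m}$. *)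

theory Defs
  imports "HOL-Analysis.Analysis"
begin

text \<open>Points of C^3 are triples (x,y,z). Germs at 0 are represented by total functions,
  only their behaviour near 0 matters.\<close>

type_synonym c3 = "complex \<times> complex \<times> complex"

definition csc :: "complex \<Rightarrow> c3 \<Rightarrow> c3" where
  "csc a v = (a * fst v, a * fst (snd v), a * snd (snd v))"

definition holo3 :: "(c3 \<Rightarrow> complex) \<Rightarrow> c3 set \<Rightarrow> bool" where
  "holo3 g U \<longleftrightarrow> open U \<and>
     (\<forall>p\<in>U. \<exists>L. (g has_derivative L) (at p) \<and> (\<forall>a v. L (csc a v) = a * L v))"

definition hgerm :: "(c3 \<Rightarrow> complex) \<Rightarrow> bool" where
  "hgerm g \<longleftrightarrow> (\<exists>U. 0 \<in> U \<and> holo3 g U)"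

definition hgerm_map :: "(c3 \<Rightarrow> c3) \<Rightarrow> bool" where
  "hgerm_map G \<longleftrightarrow> hgerm (\<lambda>p. fst (G p)) \<and> hgerm (\<lambda>p. fst (snd (G p)))
      \<and> hgerm (\<lambda>p. snd (snd (G p)))"

definition in_m :: "(c3 \<Rightarrow> complex) \<Rightarrow> bool" where
  "in_m g \<longleftrightarrow> hgerm g \<and> g 0 = 0"

definition in_m2 :: "(c3 \<Rightarrow> complex) \<Rightarrow> bool" where
  "in_m2 g \<longleftrightarrow> (\<exists>(n::nat) a b. (\<forall>i<n. in_m (a i) \<and> in_m (b i)) \<and>
      eventually (\<lambda>p. g p = (\<Sum>i<n. a i p * b i p)) (nhds 0))"

definition loc_biholo :: "(c3 \<Rightarrow> c3) \<Rightarrow> (c3 \<Rightarrow> c3) \<Rightarrow> bool" where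
  "loc_biholo \<phi> \<psi> \<longleftrightarrow> hgerm_map \<phi> \<and> hgerm_map \<psi> \<and> \<phi> 0 = 0 \<and> \<psi> 0 = 0 \<and>
     eventually (\<lambda>p. \<psi> (\<phi> p) = p) (nhds 0) \<and> eventually (\<lambda>q. \<phi> (\<psi> q) = q) (nhds 0)"

definition conj_to :: "(c3 \<Rightarrow> c3) \<Rightarrow> (c3 \<Rightarrow> c3) \<Rightarrow> bool" where
  "conj_to g h \<longleftrightarrow> (\<exists>\<phi> \<psi>. loc_biholo \<phi> \<psi> \<and> eventually (\<lambda>p. g p = \<psi> (h (\<phi> p))) (nhds 0))"

definition half_corner_form ::
  "nat \<Rightarrow> complex \<Rightarrow> (c3 \<Rightarrow> complex) \<Rightarrow> (c3 \<Rightarrow> complex) \<Rightarrow> (c3 \<Rightarrow> complex) \<Rightarrow> (c3 \<Rightarrow> c3) \<Rightarrow> bool" where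
  "half_corner_form c \<beta> P Q R h \<longleftrightarrow> 0 < c \<and> in_m2 P \<and> in_m Q \<and> hgerm R \<and>
     eventually (\<lambda>(x, y, z). h (x, y, z) =
        (x + z ^ c * (x + P (x, y, z)),
         y + z ^ (c + 1) * (\<beta> + Q (x, y, z)),
         z + z ^ (c + 2) * R (x, y, z))) (nhds 0)"

definition simple_corner_form ::
  "nat \<Rightarrow> nat \<Rightarrow> nat \<Rightarrow> complex \<Rightarrow> complex \<Rightarrow> (c3 \<Rightarrow> complex) \<Rightarrow> (c3 \<Rightarrow> complex) \<Rightarrow> (c3 \<Rightarrow> complex)
     \<Rightarrow> (c3 \<Rightarrow> c3) \<Rightarrow> bool" where
  "simple_corner_form a b c lam mu P Q R h \<longleftrightarrow> 0 < a \<and> 0 < b \<and> lam \<noteq> 0 \<and>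
     \<not> (\<exists>q::rat. q > 0 \<and> mu = lam * of_rat q) \<and> in_m P \<and> in_m Q \<and> in_m R \<and>
     (0 < c \<longrightarrow> (\<exists>R'. hgerm R' \<and> eventually (\<lambda>(x, y, z). R (x, y, z) = z * R' (x, y, z)) (nhds 0))) \<and>
     eventually (\<lambda>(x, y, z). h (x, y, z) =
        (x + x ^ a * y ^ b * z ^ c * (x * (lam + P (x, y, z))),
         y + x ^ a * y ^ b * z ^ c * (y * (mu + Q (x, y, z))),
         z + x ^ a * y ^ b * z ^ c * R (x, y, z))) (nhds 0)"

definition spinning_corner_form ::
  "nat \<Rightarrow> nat \<Rightarrow> (c3 \<Rightarrow> complex) \<Rightarrow> (c3 \<Rightarrow> complex) \<Rightarrow> (c3 \<Rightarrow> complex) \<Rightarrow> (c3 \<Rightarrow> c3) \<Rightarrow> bool" where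
  "spinning_corner_form b c P Q R h \<longleftrightarrow> 0 < b \<and> 0 < c \<and> in_m2 P \<and> in_m Q \<and> in_m R \<and>
     eventually (\<lambda>(x, y, z). h (x, y, z) =
        (x + y ^ b * z ^ c * (x + P (x, y, z)),
         y + y ^ (b + 1) * z ^ c * Q (x, y, z),
         z + y ^ b * z ^ (c + 1) * R (x, y, z))) (nhds 0)"

definition is_half_corner :: "(c3 \<Rightarrow> c3) \<Rightarrow> bool" where
  "is_half_corner g \<longleftrightarrow> (\<exists>c \<beta> P Q R h. half_corner_form c \<beta> P Q R h \<and> conj_to g h)"

definition is_simple_corner :: "(c3 \<Rightarrow> c3) \<Rightarrow> bool" where
  "is_simple_corner g \<longleftrightarrow> (\<exists>a b c lam mu P Q R h. simple_corner_form a b c lam mu P Q R h \<and> conj_to g h)"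

definition is_spinning_corner :: "(c3 \<Rightarrow> c3) \<Rightarrow> bool" where
  "is_spinning_corner g \<longleftrightarrow> (\<exists>b c P Q R h. spinning_corner_form b c P Q R h \<and> conj_to g h)"

text \<open>Homogeneous part of degree k of a holomorphic germ: k-th Taylor coefficient of t \<mapsto> g(t v).\<close>
definition hom_part :: "nat \<Rightarrow> (c3 \<Rightarrow> complex) \<Rightarrow> c3 \<Rightarrow> complex" where
  "hom_part k g v = (deriv ^^ k) (\<lambda>t. g (csc t v)) 0 / of_nat (fact k)"

definition hom_part_map :: "nat \<Rightarrow> (c3 \<Rightarrow> c3) \<Rightarrow> c3 \<Rightarrow> c3" where
  "hom_part_map k G v = (hom_part k (\<lambda>p. fst (G p)) v, hom_part k (\<lambda>p. fst (snd (G p))) v,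
                         hom_part k (\<lambda>p. snd (snd (G p))) v)"

definition lowest_hom :: "(c3 \<Rightarrow> c3) \<Rightarrow> c3 \<Rightarrow> c3" where
  "lowest_hom G = hom_part_map (LEAST k. \<exists>w. hom_part_map k G w \<noteq> 0) G"

text \<open>Singular directions with respect to ell = z^c: G = ell^{-1}(f - id), H_ell = lowest_hom G,
  v singular with eigenvalue lam if H_ell v = lam v.\<close>
definition singular_dir :: "(c3 \<Rightarrow> c3) \<Rightarrow> nat \<Rightarrow> c3 \<Rightarrow> complex \<Rightarrow> bool" where
  "singular_dir f c v lam \<longleftrightarrow> v \<noteq> 0 \<and>
     (\<exists>G. hgerm_map G \<and> eventually (\<lambda>p. f p - p = csc ((snd (snd p)) ^ c) (G p)) (nhds 0)
          \<and> lowest_hom G v = csc lam v)"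

definition degenerate_dir :: "(c3 \<Rightarrow> c3) \<Rightarrow> nat \<Rightarrow> c3 \<Rightarrow> bool" where
  "degenerate_dir f c v \<longleftrightarrow> singular_dir f c v 0"

definition exceptional_dir :: "c3 \<Rightarrow> bool" where
  "exceptional_dir v \<longleftrightarrow> v \<noteq> 0 \<and> snd (snd v) = 0"

text \<open>The projective point [w], as the set of its nonzero representatives.\<close>
definition cline :: "c3 \<Rightarrow> c3 set" where
  "cline w = {csc t w | t. t \<noteq> 0}"

text \<open>Lift of f to the blow-up, expressed in standard affine charts centred at the given point.\<close>
definition lift_chart1 :: "(c3 \<Rightarrow> c3) \<Rightarrow> (c3 \<Rightarrow> c3) \<Rightarrow> bool" where
  "lift_chart1 f g \<longleftrightarrow> hgerm_map g \<and>
     eventually (\<lambda>(x, u, v). x \<noteq> 0 \<longrightarrow>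
        (let q = f (x, x * u, x * v) in fst q \<noteq> 0 \<and>
          g (x, u, v) = (fst q, fst (snd q) / fst q, snd (snd q) / fst q))) (nhds 0)"

definition lift_chart2 :: "(c3 \<Rightarrow> c3) \<Rightarrow> (c3 \<Rightarrow> c3) \<Rightarrow> bool" where
  "lift_chart2 f g \<longleftrightarrow> hgerm_map g \<and>
     eventually (\<lambda>(u, y, v). y \<noteq> 0 \<longrightarrow>
        (let q = f (u * y, y, v * y) in fst (snd q) \<noteq> 0 \<and>
          g (u, y, v) = (fst q / fst (snd q), fst (snd q), snd (snd q) / fst (snd q)))) (nhds 0)"

definition lift_chart3 :: "complex \<Rightarrow> (c3 \<Rightarrow> c3) \<Rightarrow> (c3 \<Rightarrow> c3) \<Rightarrow> bool" where
  "lift_chart3 y0 f g \<longleftrightarrow> hgerm_map g \<and>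
     eventually (\<lambda>(u, w, z). z \<noteq> 0 \<longrightarrow>
        (let q = f (u * z, (w + y0) * z, z) in snd (snd q) \<noteq> 0 \<and>
          g (u, w, z) = (fst q / snd (snd q), fst (snd q) / snd (snd q) - y0, snd (snd q)))) (nhds 0)"

end

theory Submission
  imports Defs "HOL-Complex_Analysis.Complex_Analysis"
begin

definition clin :: "(c3 \<Rightarrow> complex) \<Rightarrow> bool" where
  "clin L \<longleftrightarrow> (\<forall>a v. L (csc a v) = a * L v)"

lemma holo3_alt: "holo3 g U \<longleftrightarrow> open U \<and> (\<forall>p\<in>U. \<exists>L. (g has_derivative L) (at p) \<and> clin L)"
  by (simp add: holo3_def clin_def)

lemma csc_simps[simp]: "fst (csc a v) = a * fst v" "fst (snd (csc a v)) = a * fst (snd v)"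
  "snd (snd (csc a v)) = a * snd (snd v)"
  by (simp_all add: csc_def)

lemma holo3_cont: "holo3 g U \<Longrightarrow> continuous_on U g"
  unfolding holo3_def
  by (meson continuous_at_imp_continuous_on has_derivative_continuous)

lemma hgermE:
  assumes "hgerm g"
  obtains U where "open U" "0 \<in> U" "\<And>p. p \<in> U \<Longrightarrow> \<exists>L. (g has_derivative L) (at p) \<and> clin L"
  using assms unfolding hgerm_def holo3_alt by blast

lemma hgermI:
  assumes "open U" "0 \<in> U" "\<And>p. p \<in> U \<Longrightarrow> \<exists>L. (g has_derivative L) (at p) \<and> clin L"
  shows "hgerm g"
  using assms unfolding hgerm_def holo3_alt by blast

lemma hgerm_isCont: "hgerm g \<Longrightarrow> isCont g 0"
  by (metis hgermE has_derivative_continuous)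

lemma hgerm_cont_nhd:
  assumes "hgerm g" obtains U where "open U" "0 \<in> U" "continuous_on U g"
  by (metis assms hgermE continuous_at_imp_continuous_on has_derivative_continuous)

lemma hgerm_cong:
  assumes "hgerm g" "eventually (\<lambda>p. g p = h p) (nhds 0)"
  shows "hgerm h"
proof -
  obtain U where U: "open U" "0 \<in> U" "\<And>p. p \<in> U \<Longrightarrow> \<exists>L. (g has_derivative L) (at p) \<and> clin L"
    using assms(1) hgermE by blast
  obtain V where V: "open V" "0 \<in> V" "\<And>p. p \<in> V \<Longrightarrow> g p = h p"
    using assms(2) unfolding eventually_nhds by blast
  show ?thesis
  proof (rule hgermI[of "U \<inter> V"])
    fix p assume p: "p \<in> U \<inter> V"
    then obtain L where "(g has_derivative L) (at p)" "clin L" using U by blast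
    then show "\<exists>L. (h has_derivative L) (at p) \<and> clin L"
      using has_derivative_transform_within_open[of g L p UNIV "U \<inter> V" h] p U V by auto
  qed (use U V in auto)
qed

lemma hgerm_const[simp, intro]: "hgerm (\<lambda>p. k)"
proof (rule hgermI[of UNIV])
  fix p :: c3
  have "((\<lambda>p. k) has_derivative (\<lambda>_. 0)) (at p)" by (rule has_derivative_const)
  moreover have "clin (\<lambda>_. 0)" by (simp add: clin_def)
  ultimately show "\<exists>L. ((\<lambda>p. k) has_derivative L) (at p) \<and> clin L" by blast
qed auto

lemma hgerm_px[intro]: "hgerm (\<lambda>p. fst p)"
proof (rule hgermI[of UNIV])
  fix p :: c3
  have "((\<lambda>p. fst p) has_derivative (\<lambda>h. fst h)) (at p)" by (rule has_derivative_fst[OF has_derivative_ident])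
  moreover have "clin (\<lambda>h. fst h)" by (simp add: clin_def)
  ultimately show "\<exists>L. ((\<lambda>p. fst p) has_derivative L) (at p) \<and> clin L" by blast
qed auto

lemma hgerm_py[intro]: "hgerm (\<lambda>p. fst (snd p))"
proof (rule hgermI[of UNIV])
  fix p :: c3
  have "((\<lambda>p. fst (snd p)) has_derivative (\<lambda>h. fst (snd h))) (at p)"
    by (rule has_derivative_fst[OF has_derivative_snd[OF has_derivative_ident]])
  moreover have "clin (\<lambda>h. fst (snd h))" by (simp add: clin_def)
  ultimately show "\<exists>L. ((\<lambda>p. fst (snd p)) has_derivative L) (at p) \<and> clin L" by blast
qed auto

lemma hgerm_pz[intro]: "hgerm (\<lambda>p. snd (snd p))"
proof (rule hgermI[of UNIV])
  fix p :: c3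
  have "((\<lambda>p. snd (snd p)) has_derivative (\<lambda>h. snd (snd h))) (at p)"
    by (rule has_derivative_snd[OF has_derivative_snd[OF has_derivative_ident]])
  moreover have "clin (\<lambda>h. snd (snd h))" by (simp add: clin_def)
  ultimately show "\<exists>L. ((\<lambda>p. snd (snd p)) has_derivative L) (at p) \<and> clin L" by blast
qed auto

lemma hgerm_add[intro]:
  assumes "hgerm f" "hgerm g" shows "hgerm (\<lambda>p. f p + g p)"
proof -
  obtain U where U: "open U" "0 \<in> U" "\<And>p. p \<in> U \<Longrightarrow> \<exists>L. (f has_derivative L) (at p) \<and> clin L"
    using assms(1) hgermE by blast
  obtain V where V: "open V" "0 \<in> V" "\<And>p. p \<in> V \<Longrightarrow> \<exists>L. (g has_derivative L) (at p) \<and> clin L"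
    using assms(2) hgermE by blast
  show ?thesis
  proof (rule hgermI[of "U \<inter> V"])
    fix p assume p: "p \<in> U \<inter> V"
    then obtain L M where "(f has_derivative L) (at p)" "clin L" "(g has_derivative M) (at p)" "clin M"
      using U V by blast
    then show "\<exists>L. ((\<lambda>p. f p + g p) has_derivative L) (at p) \<and> clin L"
      by (intro exI[of _ "\<lambda>h. L h + M h"] conjI has_derivative_add) (auto simp: clin_def algebra_simps)
  qed (use U V in auto)
qed

lemma hgerm_mult[intro]:
  assumes "hgerm f" "hgerm g" shows "hgerm (\<lambda>p. f p * g p)"
proof -
  obtain U where U: "open U" "0 \<in> U" "\<And>p. p \<in> U \<Longrightarrow> \<exists>L. (f has_derivative L) (at p) \<and> clin L"
    using assms(1) hgermE by blast
  obtain V where V: "open V" "0 \<in> V" "\<And>p. p \<in> V \<Longrightarrow> \<exists>L. (g has_derivative L) (at p) \<and> clin L"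
    using assms(2) hgermE by blast
  show ?thesis
  proof (rule hgermI[of "U \<inter> V"])
    fix p assume p: "p \<in> U \<inter> V"
    then obtain L M where "(f has_derivative L) (at p)" "clin L" "(g has_derivative M) (at p)" "clin M"
      using U V by blast
    then show "\<exists>L. ((\<lambda>p. f p * g p) has_derivative L) (at p) \<and> clin L"
      by (intro exI[of _ "\<lambda>h. f p * M h + L h * g p"] conjI has_derivative_mult) (auto simp: clin_def algebra_simps)
  qed (use U V in auto)
qed

lemma hgerm_minus[intro]: "hgerm f \<Longrightarrow> hgerm (\<lambda>p. - f p)"
  using hgerm_mult[of "\<lambda>p. -1" f] by simp

lemma hgerm_diff[intro]: "hgerm f \<Longrightarrow> hgerm g \<Longrightarrow> hgerm (\<lambda>p. f p - g p)"
  using hgerm_add[of f "\<lambda>p. - g p"] by auto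

lemma hgerm_power[intro]: "hgerm f \<Longrightarrow> hgerm (\<lambda>p. f p ^ n)"
  by (induction n) auto

lemma hgerm_sum[intro]: "(\<And>i. i \<in> S \<Longrightarrow> hgerm (f i)) \<Longrightarrow> hgerm (\<lambda>p. \<Sum>i\<in>S. f i p)"
proof (induction S rule: infinite_finite_induct)
  case (insert x F) then show ?case by (simp add: hgerm_add)
qed auto

lemma hgerm_inverse:
  assumes "hgerm f" "f 0 \<noteq> 0" shows "hgerm (\<lambda>p. inverse (f p))"
proof -
  obtain U where U: "open U" "0 \<in> U" "\<And>p. p \<in> U \<Longrightarrow> \<exists>L. (f has_derivative L) (at p) \<and> clin L"
    using assms(1) hgermE by blast
  have "continuous_on U f"
    by (meson U continuous_at_imp_continuous_on has_derivative_continuous)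
  then have oV: "open (f -` (- {0}) \<inter> U)"
    using continuous_on_open_vimage[of U f] U(1) open_Compl[OF closed_singleton] by blast
  show ?thesis
  proof (rule hgermI[of "f -` (- {0}) \<inter> U"])
    fix p assume p: "p \<in> f -` (- {0}) \<inter> U"
    then have fp: "f p \<noteq> 0" by auto
    obtain L where "(f has_derivative L) (at p)" "clin L"
      using U p by blast
    then show "\<exists>L. ((\<lambda>p. inverse (f p)) has_derivative L) (at p) \<and> clin L"
      using fp
      by (intro exI[of _ "\<lambda>h. - (inverse (f p) * L h * inverse (f p))"] conjI Deriv.has_derivative_inverse)
         (auto simp: clin_def algebra_simps)
  qed (use U oV assms(2) in auto)
qed

lemma hgerm_divide[intro]:
  assumes "hgerm f" "hgerm g" "g 0 \<noteq> 0" shows "hgerm (\<lambda>p. f p / g p)"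
  using hgerm_mult[OF assms(1) hgerm_inverse[OF assms(2,3)]] by (simp add: divide_inverse)

lemma hgerm_compose:
  assumes "hgerm g" "hgerm f1" "hgerm f2" "hgerm f3" "f1 0 = 0" "f2 0 = 0" "f3 0 = 0"
  shows "hgerm (\<lambda>p. g (f1 p, f2 p, f3 p))"
proof -
  obtain U where U: "open U" "0 \<in> U" "\<And>p. p \<in> U \<Longrightarrow> \<exists>L. (g has_derivative L) (at p) \<and> clin L"
    using assms(1) hgermE by blast
  obtain V1 where V1: "open V1" "0 \<in> V1" "\<And>p. p \<in> V1 \<Longrightarrow> \<exists>L. (f1 has_derivative L) (at p) \<and> clin L"
    using assms(2) hgermE by blast
  obtain V2 where V2: "open V2" "0 \<in> V2" "\<And>p. p \<in> V2 \<Longrightarrow> \<exists>L. (f2 has_derivative L) (at p) \<and> clin L"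
    using assms(3) hgermE by blast
  obtain V3 where V3: "open V3" "0 \<in> V3" "\<And>p. p \<in> V3 \<Longrightarrow> \<exists>L. (f3 has_derivative L) (at p) \<and> clin L"
    using assms(4) hgermE by blast
  define W where "W = V1 \<inter> V2 \<inter> V3"
  have W: "open W" "0 \<in> W" using V1 V2 V3 by (auto simp: W_def)
  have "continuous_on W (\<lambda>p. (f1 p, f2 p, f3 p))"
    unfolding W_def
    by (intro continuous_on_Pair continuous_at_imp_continuous_on ballI)
       (meson IntD1 IntD2 V1 V2 V3 has_derivative_continuous)+
  then have oV: "open ((\<lambda>p. (f1 p, f2 p, f3 p)) -` U \<inter> W)"
    using continuous_on_open_vimage W(1) U(1) by blast
  show ?thesis
  proof (rule hgermI[of "(\<lambda>p. (f1 p, f2 p, f3 p)) -` U \<inter> W"])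
    fix p assume p: "p \<in> (\<lambda>p. (f1 p, f2 p, f3 p)) -` U \<inter> W"
    then have pU: "(f1 p, f2 p, f3 p) \<in> U" by auto
    obtain L where L: "(g has_derivative L) (at (f1 p, f2 p, f3 p))" "clin L" using U pU by blast
    obtain L1 where L1: "(f1 has_derivative L1) (at p)" "clin L1" using V1 p W_def by blast
    obtain L2 where L2: "(f2 has_derivative L2) (at p)" "clin L2" using V2 p W_def by blast
    obtain L3 where L3: "(f3 has_derivative L3) (at p)" "clin L3" using V3 p W_def by blast
    have d: "((\<lambda>p. (f1 p, f2 p, f3 p)) has_derivative (\<lambda>h. (L1 h, L2 h, L3 h))) (at p)"
      using L1 L2 L3 by (auto intro!: has_derivative_Pair)
    have "((\<lambda>p. g (f1 p, f2 p, f3 p)) has_derivative (\<lambda>h. L (L1 h, L2 h, L3 h))) (at p)"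
      using has_derivative_compose[OF d L(1)] by (simp add: o_def)
    moreover have "clin (\<lambda>h. L (L1 h, L2 h, L3 h))"
    proof -
      { fix a v
        have "(L1 (csc a v), L2 (csc a v), L3 (csc a v)) = csc a (L1 v, L2 v, L3 v)"
          using L1(2) L2(2) L3(2) by (simp add: clin_def csc_def)
        then have "L (L1 (csc a v), L2 (csc a v), L3 (csc a v)) = a * L (L1 v, L2 v, L3 v)"
          using L(2) by (simp add: clin_def) }
      then show ?thesis by (simp add: clin_def)
    qed
    ultimately show "\<exists>L. ((\<lambda>p. g (f1 p, f2 p, f3 p)) has_derivative L) (at p) \<and> clin L" by blast
  qed (use W oV U assms(5-7) in \<open>auto simp: zero_prod_def\<close>)
qed

lemma line_deriv:
  assumes "(a has_derivative L) (at (csc t w))" "clin L"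
  shows "((\<lambda>s. a (csc s w)) has_field_derivative L w) (at t)"
proof -
  have d: "((\<lambda>s. csc s w) has_derivative (\<lambda>h. csc h w)) (at t)"
    unfolding csc_def
    by (intro has_derivative_Pair has_derivative_mult_left has_derivative_ident)
  have "((\<lambda>s. a (csc s w)) has_derivative (\<lambda>h. L (csc h w))) (at t)"
    using has_derivative_compose[OF d assms(1)] by (simp add: o_def)
  moreover have "(\<lambda>h. L (csc h w)) = (*) (L w)"
  proof
    fix h show "L (csc h w) = L w * h" using assms(2) by (metis clin_def mult.commute)
  qed
  ultimately show ?thesis by (simp add: has_field_derivative_def)
qed

lemma csc_zero[simp]: "csc 0 w = 0"
  by (simp add: csc_def zero_prod_def)

lemma norm_c3_le: "norm (p::c3) \<le> norm (fst p) + norm (fst (snd p)) + norm (snd (snd p))"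
proof -
  have "norm p \<le> norm (fst p) + norm (snd p)" using norm_Pair_le[of "fst p" "snd p"] by simp
  also have "norm (snd p) \<le> norm (fst (snd p)) + norm (snd (snd p))"
    using norm_Pair_le[of "fst (snd p)" "snd (snd p)"] by simp
  finally show ?thesis by simp
qed

lemma core_div:
  assumes "hgerm a" "a 0 = 0"
  shows "\<exists>A. hgerm A \<and> (\<forall>x u v. a (x, x * (u + c1), x * (v + c2)) = x * A (x, u, v))"
proof -
  obtain U where U: "open U" "0 \<in> U" "\<And>p. p \<in> U \<Longrightarrow> \<exists>L. (a has_derivative L) (at p) \<and> clin L"
    using assms(1) hgermE by blast
  obtain \<epsilon> where \<epsilon>: "\<epsilon> > 0" "ball 0 \<epsilon> \<subseteq> U"
    using U(1,2) open_contains_ball by blast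
  have contU: "continuous_on U a"
    by (meson U continuous_at_imp_continuous_on has_derivative_continuous)
  define M where "M = 3 + norm c1 + norm c2"
  have M: "M > 0" by (simp add: M_def add_pos_nonneg)
  define R0 where "R0 = \<epsilon> / M"
  define r where "r = R0 / 2"
  have R00: "R0 > 0" using \<epsilon> M by (simp add: R0_def)
  then have R0: "R0 > 0" "r > 0" "r < R0" by (auto simp: r_def)
  define X where "X = ball (0::complex\<times>complex) 1"
  define Y where "Y = ball (0::complex) (r/2)"
  define w where "w q = ((1::complex), fst q + c1, snd q + c2)" for q :: "complex\<times>complex"
  have inU: "csc t (w q) \<in> U" if "q \<in> X" "norm t < R0" for q t
  proof -
    have q: "norm (fst q) < 1" "norm (snd q) < 1"
      using that(1) norm_fst_le[of "fst q" "snd q"] norm_snd_le[of "snd q" "fst q"] unfolding X_def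
      by auto
    have "norm (csc t (w q)) \<le> norm t + norm (t * (fst q + c1)) + norm (t * (snd q + c2))"
      using norm_c3_le[of "csc t (w q)"] by (simp add: w_def)
    also have "\<dots> \<le> norm t * M"
    proof -
      have "norm (fst q + c1) \<le> 1 + norm c1" "norm (snd q + c2) \<le> 1 + norm c2"
        using q norm_triangle_ineq[of "fst q" c1] norm_triangle_ineq[of "snd q" c2] by linarith+
      then have "norm t * norm (fst q + c1) \<le> norm t * (1 + norm c1)"
                "norm t * norm (snd q + c2) \<le> norm t * (1 + norm c2)"
        by (auto intro: mult_left_mono)
      moreover have "norm t * M = norm t * 3 + norm t * norm c1 + norm t * norm c2"
        by (simp add: M_def distrib_left)
      moreover have "norm t * (1 + norm c1) = norm t + norm t * norm c1"
        "norm t * (1 + norm c2) = norm t + norm t * norm c2"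
        by (simp_all add: distrib_left)
      ultimately show ?thesis unfolding norm_mult by linarith
    qed
    also have "\<dots> < R0 * M" using that(2) M by simp
    also have "\<dots> = \<epsilon>" using M by (simp add: R0_def)
    finally show ?thesis using \<epsilon> by auto
  qed
  define g where "g q t = a (csc t (w q))" for q t
  have gfun: "g q = (\<lambda>s. a (csc s (w q)))" for q by (rule ext) (simp add: g_def)
  have gder: "\<exists>L. (g q has_field_derivative L) (at t)" if qt: "q \<in> X" "norm t < R0" for q t
  proof -
    obtain L where "(a has_derivative L) (at (csc t (w q)))" "clin L" using U inU[OF qt] by blast
    from line_deriv[OF this] show ?thesis unfolding g_def by blast
  qed
  have ghol: "g q holomorphic_on ball 0 R0" if "q \<in> X" for q
    using gder[OF that] unfolding holomorphic_on_def field_differentiable_def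
    by (metis dist_0_norm has_field_derivative_at_within mem_ball)
  define \<Psi> where "\<Psi> q x = (if x = 0 then deriv (g q) 0 else g q x / x)" for q x
  have g0: "g q 0 = 0" for q by (simp add: g_def assms(2))
  have Psihol: "\<Psi> q holomorphic_on ball 0 R0" if "q \<in> X" for q
  proof -
    have "(\<lambda>z. if z = 0 then deriv (g q) 0 else (g q z - g q 0)/(z - 0)) holomorphic_on ball 0 R0"
      by (rule pole_lemma_open[OF ghol[OF that]]) simp
    moreover have "(\<lambda>z. if z = 0 then deriv (g q) 0 else (g q z - g q 0)/(z - 0)) = \<Psi> q"
      by (auto simp: \<Psi>_def g0)
    ultimately show ?thesis by simp
  qed
  define D where "D q x = 1 / (2 * of_real pi * \<i>) *
       contour_integral (circlepath 0 r) (\<lambda>\<zeta>. a (csc \<zeta> (w q)) / (\<zeta> * (\<zeta> - x)^2))" for q x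
  have Dder: "(\<Psi> q has_field_derivative D q x) (at x)" if "q \<in> X" "x \<in> Y" for q x
  proof -
    have sub: "cball 0 r \<subseteq> ball 0 R0" using R0 by auto
    have cont: "continuous_on (cball 0 r) (\<Psi> q)"
      using holomorphic_on_imp_continuous_on[OF Psihol[OF that(1)]] continuous_on_subset sub by blast
    have hol: "\<Psi> q holomorphic_on ball 0 r"
      using Psihol[OF that(1)] holomorphic_on_subset R0 by (meson ball_subset_cball order.trans sub)
    have xin: "x \<in> ball 0 r" using that(2) R0 by (auto simp: Y_def)
    have *: "(\<Psi> q has_field_derivative (1 / (2 * of_real pi * \<i>) *
         contour_integral (circlepath 0 r) (\<lambda>u. \<Psi> q u / (u-x)^2))) (at x)"
      by (rule Cauchy_derivative_integral_circlepath(2)[OF cont hol xin])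
    have "contour_integral (circlepath 0 r) (\<lambda>u. \<Psi> q u / (u-x)^2) =
          contour_integral (circlepath 0 r) (\<lambda>\<zeta>. a (csc \<zeta> (w q)) / (\<zeta> * (\<zeta> - x)^2))"
    proof (rule contour_integral_cong[OF refl])
      fix \<zeta> assume "\<zeta> \<in> path_image (circlepath 0 r)"
      then have "\<zeta> \<noteq> 0" using R0 by auto
      then show "\<Psi> q \<zeta> / (\<zeta> - x)^2 = a (csc \<zeta> (w q)) / (\<zeta> * (\<zeta> - x)^2)"
        by (simp add: \<Psi>_def g_def)
    qed
    with * show ?thesis by (simp add: D_def)
  qed
  define \<gamma> where "\<gamma> = circlepath (0::complex) r"
  define K where "K z t = a (csc (\<gamma> t) (w (fst z))) / (\<gamma> t * (\<gamma> t - snd z)^2) *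
      (2 * of_real pi * \<i> * r * exp (2 * of_real pi * \<i> * t))" for z :: "(complex\<times>complex)\<times>complex" and t :: real
  have Dint: "D q x = 1 / (2 * of_real pi * \<i>) * integral (cbox 0 1) (K (q,x))" for q x
    unfolding D_def contour_integral_integral K_def \<gamma>_def vector_derivative_circlepath
    by (simp add: cbox_interval)
  have normg: "norm (\<gamma> t) = r" for t
    using R0 by (simp add: \<gamma>_def circlepath norm_mult norm_exp_eq_Re)
  have Kcont: "continuous_on ((X \<times> Y) \<times> cbox 0 1) (\<lambda>(z, t). K z t)"
  proof -
    have c1: "continuous_on ((X \<times> Y) \<times> cbox 0 1) (\<lambda>zt. csc (\<gamma> (snd zt)) (w (fst (fst zt))))"
      unfolding csc_def w_def \<gamma>_def circlepath case_prod_unfold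
      by (intro continuous_intros)
    have c2: "continuous_on ((X \<times> Y) \<times> cbox 0 1) (\<lambda>zt. a (csc (\<gamma> (snd zt)) (w (fst (fst zt)))))"
    proof (rule continuous_on_compose2[OF contU c1])
      show "(\<lambda>zt. csc (\<gamma> (snd zt)) (w (fst (fst zt)))) ` ((X \<times> Y) \<times> cbox 0 1) \<subseteq> U"
        using inU normg R0 by auto
    qed
    have nz: "\<gamma> t * (\<gamma> t - snd z)^2 \<noteq> 0" if "z \<in> X \<times> Y" for z t
    proof -
      have "norm (snd z) < r/2" using that by (auto simp: Y_def)
      then have "\<gamma> t - snd z \<noteq> 0" using normg[of t] R0 by auto
      moreover have "\<gamma> t \<noteq> 0" using normg[of t] R0 by auto
      ultimately show ?thesis by simp
    qed
    have c3: "continuous_on ((X \<times> Y) \<times> cbox 0 1) (\<lambda>zt. \<gamma> (snd zt) * (\<gamma> (snd zt) - snd (fst zt))^2)"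
      unfolding \<gamma>_def circlepath by (intro continuous_intros)
    have c4: "continuous_on ((X \<times> Y) \<times> cbox 0 1) (\<lambda>zt. a (csc (\<gamma> (snd zt)) (w (fst (fst zt)))) /
        (\<gamma> (snd zt) * (\<gamma> (snd zt) - snd (fst zt))^2))"
      by (rule continuous_on_divide[OF c2 c3]) (use nz in auto)
    have c5: "continuous_on ((X \<times> Y) \<times> cbox 0 1) (\<lambda>zt::((complex\<times>complex)\<times>complex)\<times>real.
        2 * of_real pi * \<i> * r * exp (2 * of_real pi * \<i> * of_real (snd zt)))"
      by (intro continuous_intros)
    show ?thesis
      using continuous_on_mult[OF c4 c5] by (simp add: K_def case_prod_unfold)
  qed
  have Dcont: "continuous_on (X \<times> Y) (\<lambda>z. D (fst z) (snd z))"
  proof -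
    have "continuous_on (X \<times> Y) (\<lambda>z. integral (cbox 0 1) (K z))"
      by (rule integral_continuous_on_param[OF Kcont])
    then show ?thesis unfolding Dint by (intro continuous_intros) auto
  qed
  have qder: "\<exists>F. ((\<lambda>q. \<Psi> q x) has_derivative F) (at q0) \<and> (\<forall>s h. F (s * fst h, s * snd h) = s * F h)"
    if qx: "q0 \<in> X" "x \<in> Y" for q0 x
  proof (cases "x = 0")
    case True
    obtain L where L: "(a has_derivative L) (at 0)" "clin L" using U by blast
    have "\<Psi> q 0 = L (w q)" for q
    proof -
      have "(g q has_field_derivative L (w q)) (at 0)"
        using line_deriv[of a L 0 "w q"] L gfun by simp
      then show ?thesis by (simp add: \<Psi>_def DERIV_imp_deriv)
    qed
    moreover have "((\<lambda>q. L (w q)) has_derivative (\<lambda>h. L (0, fst h, snd h))) (at q0)"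
    proof -
      have bl: "bounded_linear L" using L(1) has_derivative_bounded_linear by blast
      have "((\<lambda>q. w q) has_derivative (\<lambda>h. (0, fst h, snd h))) (at q0)"
        unfolding w_def
        by (intro has_derivative_Pair has_derivative_const has_derivative_add_const has_derivative_fst
              has_derivative_snd has_derivative_ident)
      from bounded_linear.has_derivative[OF bl this] show ?thesis .
    qed
    moreover have "\<forall>s h. L (0, s * fst h, s * snd h) = s * L (0, fst h, snd h)"
      using L(2) unfolding clin_def by (metis csc_def mult_zero_right fst_conv snd_conv)
    ultimately show ?thesis using True by auto
  next
    case False
    have xR: "norm x < R0" using qx(2) R0 by (auto simp: Y_def)
    obtain L where L: "(a has_derivative L) (at (csc x (w q0)))" "clin L" using U inU[OF qx(1) xR] by blast
    have e: "\<Psi> q x = a (csc x (w q)) / x" for q using False by (simp add: \<Psi>_def g_def)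
    have cw: "(\<lambda>q. csc x (w q)) = (\<lambda>q. (x, x * (fst q + c1), x * (snd q + c2)))"
      by (auto simp: csc_def w_def)
    have d1: "((\<lambda>q. csc x (w q)) has_derivative (\<lambda>h. (0, x * fst h, x * snd h))) (at q0)"
      unfolding cw
      by (intro has_derivative_Pair has_derivative_const has_derivative_add_const has_derivative_fst
              has_derivative_snd has_derivative_ident has_derivative_mult_right)
    have "((\<lambda>q. a (csc x (w q))) has_derivative (\<lambda>h. L (0, x * fst h, x * snd h))) (at q0)"
      using has_derivative_compose[OF d1 L(1)] by (simp add: o_def)
    then have "((\<lambda>q. a (csc x (w q)) * inverse x) has_derivative (\<lambda>h. L (0, x * fst h, x * snd h) * inverse x)) (at q0)"
      by (rule has_derivative_mult_left)
    then have "((\<lambda>q. a (csc x (w q)) / x) has_derivative (\<lambda>h. L (0, x * fst h, x * snd h) / x)) (at q0)"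
      by (simp add: divide_inverse)
    moreover have "\<forall>s h. L (0, x * (s * fst h), x * (s * snd h)) / x = s * (L (0, x * fst h, x * snd h) / x)"
    proof (intro allI)
      fix s h
      have "(0, x * (s * fst h), x * (s * snd h)) = csc s (0, x * fst h, x * snd h)"
        by (simp add: csc_def algebra_simps)
      then show "L (0, x * (s * fst h), x * (s * snd h)) / x = s * (L (0, x * fst h, x * snd h) / x)"
        using L(2) by (simp add: clin_def)
    qed
    ultimately show ?thesis unfolding e by auto
  qed
  have joint: "\<exists>L. ((\<lambda>z. \<Psi> (fst z) (snd z)) has_derivative L) (at (q0, x0)) \<and>
      (\<forall>s hq hx. L ((s * fst hq, s * snd hq), s * hx) = s * L (hq, hx))"
    if qx0: "q0 \<in> X" "x0 \<in> Y" for q0 x0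
  proof -
    obtain F where F: "((\<lambda>q. \<Psi> q x0) has_derivative F) (at q0)" "\<forall>s h. F (s * fst h, s * snd h) = s * F h"
      using qder[OF qx0] by blast
    have fy: "((\<lambda>x. \<Psi> q x) has_derivative blinfun_apply (blinfun_mult_left (D q x))) (at x within Y)"
      if "q \<in> X" "x \<in> Y" for q x
    proof -
      have "((\<lambda>x. \<Psi> q x) has_derivative (*) (D q x)) (at x)"
        using Dder[OF that] by (simp add: has_field_derivative_def)
      moreover have "blinfun_apply (blinfun_mult_left (D q x)) = (*) (D q x)"
        by (auto simp: blinfun_mult_left.rep_eq mult.commute)
      ultimately show ?thesis by (simp add: has_derivative_at_withinI)
    qed
    have fyc: "continuous (at (q0, x0) within X \<times> Y) (\<lambda>(q, x). blinfun_mult_left (D q x))"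
    proof -
      have "continuous_on (X \<times> Y) (\<lambda>z. blinfun_mult_left (D (fst z) (snd z)))"
        using Dcont by (intro bounded_linear.continuous_on[OF bounded_linear_blinfun_mult_left])
      then show ?thesis using qx0
        by (simp add: continuous_on_eq_continuous_within case_prod_unfold)
    qed
    have convY: "convex Y" unfolding Y_def by (rule convex_ball)
    have der: "((\<lambda>(q, x). \<Psi> q x) has_derivative (\<lambda>(tq, tx). F tq + blinfun_apply (blinfun_mult_left (D q0 x0)) tx))
        (at (q0, x0) within X \<times> Y)"
      by (rule has_derivative_partialsI[where f="\<lambda>q x. \<Psi> q x" and X=X and Y=Y, OF has_derivative_at_withinI[OF F(1)] fy fyc qx0(2) convY])
    have oXY: "open (X \<times> Y)" by (simp add: X_def Y_def open_Times)
    have e1: "at (q0, x0) within X \<times> Y = at (q0, x0)"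
      by (rule at_within_open) (use qx0 oXY in auto)
    have e2: "(\<lambda>(tq, tx). F tq + blinfun_apply (blinfun_mult_left (D q0 x0)) tx) = (\<lambda>(tq, tx). F tq + tx * D q0 x0)"
      by (auto simp: blinfun_mult_left.rep_eq)
    have "((\<lambda>(q, x). \<Psi> q x) has_derivative (\<lambda>(tq, tx). F tq + tx * D q0 x0)) (at (q0, x0))"
      using der unfolding e1 e2 .
    moreover have "\<forall>s hq hx. (\<lambda>(tq, tx). F tq + tx * D q0 x0) ((s * fst hq, s * snd hq), s * hx) =
        s * (\<lambda>(tq, tx). F tq + tx * D q0 x0) (hq, hx)"
      using F(2) by (simp add: algebra_simps)
    ultimately show ?thesis by (auto simp: case_prod_unfold)
  qed
  define A where "A p = \<Psi> (fst (snd p), snd (snd p)) (fst p)" for p :: c3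
  define sw where "sw p = ((fst (snd p), snd (snd p)), fst p)" for p :: c3
  have swd: "(sw has_derivative sw) (at p)" for p
    unfolding sw_def
    by (intro has_derivative_Pair has_derivative_fst has_derivative_snd has_derivative_ident)
  have "hgerm A"
  proof (rule hgermI[of "sw -` (X \<times> Y)"])
    show "open (sw -` (X \<times> Y))"
      by (rule open_vimage) (auto simp: X_def Y_def open_Times sw_def intro!: continuous_intros)
    show "0 \<in> sw -` (X \<times> Y)" using R0 by (simp add: sw_def X_def Y_def zero_prod_def)
  next
    fix p assume "p \<in> sw -` (X \<times> Y)"
    then have "fst (sw p) \<in> X" "snd (sw p) \<in> Y" by auto
    from joint[OF this] obtain L where L: "((\<lambda>z. \<Psi> (fst z) (snd z)) has_derivative L) (at (sw p))"
      "\<forall>s hq hx. L ((s * fst hq, s * snd hq), s * hx) = s * L (hq, hx)" by auto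
    have "((\<lambda>p. \<Psi> (fst (sw p)) (snd (sw p))) has_derivative (\<lambda>h. L (sw h))) (at p)"
      using has_derivative_compose[OF swd L(1)] by (simp add: o_def)
    moreover have "(\<lambda>p. \<Psi> (fst (sw p)) (snd (sw p))) = A" by (auto simp: A_def sw_def)
    moreover have "clin (\<lambda>h. L (sw h))"
      unfolding clin_def sw_def using L(2) by (auto simp: csc_def)
    ultimately show "\<exists>L. (A has_derivative L) (at p) \<and> clin L" by auto
  qed
  moreover have "a (x, x * (u + c1), x * (v + c2)) = x * A (x, u, v)" for x u v
  proof (cases "x = 0")
    case True then show ?thesis using assms(2) by (simp add: zero_prod_def)
  next
    case False
    then show ?thesis by (simp add: A_def \<Psi>_def g_def w_def csc_def)
  qed
  ultimately show ?thesis by blast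
qed

lemma ev_transfer:
  assumes "isCont m 0" "m 0 = 0" "eventually Q (nhds (0::c3))"
  shows "eventually (\<lambda>p. Q (m p)) (nhds (0::c3))"
proof -
  obtain S where S: "open S" "0 \<in> S" "\<And>x. x \<in> S \<Longrightarrow> Q x" using assms(3) unfolding eventually_nhds by blast
  obtain T where T: "open T" "0 \<in> T" "\<And>x. x \<in> T \<Longrightarrow> m x \<in> S"
    using assms(1) S(1,2) assms(2) unfolding continuous_at_open by metis
  show ?thesis unfolding eventually_nhds using T S by blast
qed

lemma hgerm_ev_nonzero:
  assumes "hgerm g" "g 0 \<noteq> 0" shows "eventually (\<lambda>p. g p \<noteq> 0) (nhds 0)"
proof -
  have "isCont g 0" using assms(1) hgerm_isCont by blast
  moreover have "open (-{0::complex})" "g 0 \<in> -{0}" using assms(2) by auto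
  ultimately obtain S where "open S" "0 \<in> S" "\<forall>x\<in>S. g x \<in> -{0}"
    unfolding continuous_at_open by metis
  then show ?thesis unfolding eventually_nhds by auto
qed

lemma div1:
  assumes "hgerm a" "a 0 = 0"
  shows "\<exists>A. hgerm A \<and> (\<forall>x u v. a (x, x * u, x * v) = x * A (x, u, v))"
  using core_div[OF assms, of 0 0] by simp

lemma div2:
  assumes "hgerm a" "a 0 = 0"
  shows "\<exists>A. hgerm A \<and> (\<forall>u y v. a (u * y, y, v * y) = y * A (u, y, v))"
proof -
  define a' where "a' = (\<lambda>p::c3. a (fst (snd p), fst p, snd (snd p)))"
  have "hgerm a'" unfolding a'_def
    by (rule hgerm_compose[OF assms(1)]) auto
  moreover have "a' 0 = 0" using assms(2) by (simp add: a'_def zero_prod_def)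
  ultimately obtain A where A: "hgerm A" "\<And>x u v. a' (x, x * (u + 0), x * (v + 0)) = x * A (x, u, v)"
    using core_div[of a' 0 0] by metis
  define A2 where "A2 = (\<lambda>p::c3. A (fst (snd p), fst p, snd (snd p)))"
  have "hgerm A2" unfolding A2_def by (rule hgerm_compose[OF A(1)]) auto
  moreover have "a (u * y, y, v * y) = y * A2 (u, y, v)" for u y v
    using A(2)[of y u v] by (simp add: a'_def A2_def mult.commute)
  ultimately show ?thesis by blast
qed

lemma div3:
  assumes "hgerm a" "a 0 = 0"
  shows "\<exists>A. hgerm A \<and> (\<forall>u w z. a (u * z, (w + y0) * z, z) = z * A (u, w, z))"
proof -
  define a' where "a' = (\<lambda>p::c3. a (fst (snd p), snd (snd p), fst p))"
  have "hgerm a'" unfolding a'_def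
    by (rule hgerm_compose[OF assms(1)]) auto
  moreover have "a' 0 = 0" using assms(2) by (simp add: a'_def zero_prod_def)
  ultimately obtain A where A: "hgerm A" "\<And>x u v. a' (x, x * (u + 0), x * (v + y0)) = x * A (x, u, v)"
    using core_div[of a' 0 y0] by metis
  define A3 where "A3 = (\<lambda>p::c3. A (snd (snd p), fst p, fst (snd p)))"
  have "hgerm A3" unfolding A3_def by (rule hgerm_compose[OF A(1)]) auto
  moreover have "a (u * z, (w + y0) * z, z) = z * A3 (u, w, z)" for u w z
    using A(2)[of z u w] by (simp add: a'_def A3_def mult.commute)
  ultimately show ?thesis by blast
qed

lemma in_m2_I:
  fixes a b :: "'i \<Rightarrow> c3 \<Rightarrow> complex"
  assumes "finite I" "\<And>i. i \<in> I \<Longrightarrow> in_m (a i) \<and> in_m (b i)"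
    "eventually (\<lambda>p. g p = (\<Sum>i\<in>I. a i p * b i p)) (nhds 0)"
  shows "in_m2 g"
proof -
  obtain h where h: "bij_betw h {0..<card I} I" using ex_bij_betw_nat_finite[OF assms(1)] by blast
  have "(\<Sum>i\<in>I. a i p * b i p) = (\<Sum>j<card I. a (h j) p * b (h j) p)" for p
    using sum.reindex_bij_betw[OF h, of "\<lambda>i. a i p * b i p"] by (simp add: lessThan_atLeast0)
  moreover have "\<forall>j<card I. in_m (a (h j)) \<and> in_m (b (h j))"
  proof (intro allI impI)
    fix j assume "j < card I"
    then have "h j \<in> I" using bij_betw_apply[OF h] by simp
    then show "in_m (a (h j)) \<and> in_m (b (h j))" using assms(2) by blast
  qed
  ultimately show ?thesis unfolding in_m2_def using assms(3)
    by (intro exI[of _ "card I"] exI[of _ "\<lambda>j. a (h j)"] exI[of _ "\<lambda>j. b (h j)"]) auto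
qed

lemma in_m2_E:
  assumes "in_m2 g"
  obtains n :: nat and a b where "\<forall>i<n. in_m (a i) \<and> in_m (b i)"
    "eventually (\<lambda>p. g p = (\<Sum>i<n. a i p * b i p)) (nhds 0)"
  using assms unfolding in_m2_def by blast

lemma in_m_hgerm: "in_m f \<Longrightarrow> hgerm f" by (simp add: in_m_def)

lemma m2_mult: "in_m f \<Longrightarrow> in_m g \<Longrightarrow> in_m2 (\<lambda>p. f p * g p)"
  by (rule in_m2_I[where I="{()}" and a="\<lambda>_. f" and b="\<lambda>_. g"]) auto

lemma m2_cong: assumes "in_m2 f" "eventually (\<lambda>p. f p = g p) (nhds 0)" shows "in_m2 g"
proof -
  obtain n :: nat and a b where f: "\<forall>i<n. in_m (a i) \<and> in_m (b i)" "eventually (\<lambda>p. f p = (\<Sum>i<n. a i p * b i p)) (nhds 0)"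
    using in_m2_E[OF assms(1)] by blast
  have "eventually (\<lambda>p. g p = (\<Sum>i<n. a i p * b i p)) (nhds 0)"
    using f(2) assms(2) by eventually_elim simp
  then show ?thesis unfolding in_m2_def using f(1) by blast
qed

lemma m2_add:
  assumes "in_m2 f" "in_m2 g" shows "in_m2 (\<lambda>p. f p + g p)"
proof -
  obtain n :: nat and a b where f: "\<forall>i<n. in_m (a i) \<and> in_m (b i)" "eventually (\<lambda>p. f p = (\<Sum>i<n. a i p * b i p)) (nhds 0)"
    using in_m2_E[OF assms(1)] by blast
  obtain n' :: nat and a' b' where g: "\<forall>i<n'. in_m (a' i) \<and> in_m (b' i)" "eventually (\<lambda>p. g p = (\<Sum>i<n'. a' i p * b' i p)) (nhds 0)"
    using in_m2_E[OF assms(2)] by blast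
  show ?thesis
  proof (rule in_m2_I[where I="{..<n} <+> {..<n'}" and a="case_sum a a'" and b="case_sum b b'"])
    show "eventually (\<lambda>p. f p + g p = (\<Sum>i\<in>{..<n} <+> {..<n'}. case_sum a a' i p * case_sum b b' i p)) (nhds 0)"
      using f(2) g(2)
    proof eventually_elim
      case (elim p)
      have "(\<Sum>i\<in>{..<n} <+> {..<n'}. case_sum a a' i p * case_sum b b' i p) =
        (\<Sum>i<n. a i p * b i p) + (\<Sum>i<n'. a' i p * b' i p)"
        using sum.Plus[OF finite_lessThan finite_lessThan, of "\<lambda>i. case_sum a a' i p * case_sum b b' i p" n n']
        by (simp add: o_def)
      then show ?case using elim by simp
    qed
  qed (use f g in auto)
qed

lemma m2_hmult:
  assumes "hgerm h" "in_m2 f" shows "in_m2 (\<lambda>p. h p * f p)"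
proof -
  obtain n :: nat and a b where f: "\<forall>i<n. in_m (a i) \<and> in_m (b i)" "eventually (\<lambda>p. f p = (\<Sum>i<n. a i p * b i p)) (nhds 0)"
    using in_m2_E[OF assms(2)] by blast
  show ?thesis
  proof (rule in_m2_I[where I="{..<n}" and a="\<lambda>i p. h p * a i p" and b=b])
    show "eventually (\<lambda>p. h p * f p = (\<Sum>i\<in>{..<n}. (h p * a i p) * b i p)) (nhds 0)"
      using f(2) by eventually_elim (simp add: sum_distrib_left mult.assoc)
  qed (use f assms(1) finite_lessThan in \<open>auto simp: in_m_def\<close>)
qed

lemma m2_zero: "in_m2 (\<lambda>p. 0)"
  unfolding in_m2_def by (intro exI[of _ 0] exI[of _ "\<lambda>_ _. 0"] conjI) auto

lemma in_m2_at0: assumes "in_m2 P" shows "P 0 = 0"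
proof -
  obtain n :: nat and a b where f: "\<forall>i<n. in_m (a i) \<and> in_m (b i)" "eventually (\<lambda>p. P p = (\<Sum>i<n. a i p * b i p)) (nhds 0)"
    using in_m2_E[OF assms(1)] by blast
  have "P 0 = (\<Sum>i<n. a i 0 * b i 0)" using eventually_nhds_x_imp_x[OF f(2)] .
  also have "\<dots> = 0" using f(1) by (intro sum.neutral) (auto simp: in_m_def)
  finally show ?thesis .
qed

lemma in_m2_hgerm: "in_m2 P \<Longrightarrow> hgerm P"
proof -
  assume "in_m2 P"
  then obtain n :: nat and a b where f: "\<forall>i<n. in_m (a i) \<and> in_m (b i)" "eventually (\<lambda>p. P p = (\<Sum>i<n. a i p * b i p)) (nhds 0)"
    using in_m2_E by blast
  have "hgerm (\<lambda>p. \<Sum>i<n. a i p * b i p)" using f(1) by (intro hgerm_sum hgerm_mult) (auto simp: in_m_def)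
  then show ?thesis using hgerm_cong f(2) by (metis (mono_tags, lifting) eventually_mono)
qed

lemma m2_chart:
  assumes "in_m2 P" "isCont m 0" "m 0 = 0"
    "\<And>a. hgerm a \<Longrightarrow> a 0 = 0 \<Longrightarrow> \<exists>A. hgerm A \<and> (\<forall>p. a (m p) = s p * A p)"
  shows "\<exists>Ph. hgerm Ph \<and> eventually (\<lambda>p. P (m p) = (s p)^2 * Ph p) (nhds 0)"
proof -
  obtain n :: nat and a b where f: "\<forall>i<n. in_m (a i) \<and> in_m (b i)" "eventually (\<lambda>p. P p = (\<Sum>i<n. a i p * b i p)) (nhds 0)"
    using in_m2_E[OF assms(1)] by blast
  have "\<forall>i. \<exists>A. i < n \<longrightarrow> hgerm A \<and> (\<forall>p. a i (m p) = s p * A p)"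
  proof
    fix i show "\<exists>A. i < n \<longrightarrow> hgerm A \<and> (\<forall>p. a i (m p) = s p * A p)"
    proof (cases "i < n")
      case True then have "hgerm (a i)" "a i 0 = 0" using f(1) by (auto simp: in_m_def)
      from assms(4)[OF this] show ?thesis by blast
    qed auto
  qed
  then obtain A where A: "\<And>i. i < n \<Longrightarrow> hgerm (A i) \<and> (\<forall>p. a i (m p) = s p * A i p)" by metis
  have "\<forall>i. \<exists>B. i < n \<longrightarrow> hgerm B \<and> (\<forall>p. b i (m p) = s p * B p)"
  proof
    fix i show "\<exists>B. i < n \<longrightarrow> hgerm B \<and> (\<forall>p. b i (m p) = s p * B p)"
    proof (cases "i < n")
      case True then have "hgerm (b i)" "b i 0 = 0" using f(1) by (auto simp: in_m_def)
      from assms(4)[OF this] show ?thesis by blast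
    qed auto
  qed
  then obtain B where B: "\<And>i. i < n \<Longrightarrow> hgerm (B i) \<and> (\<forall>p. b i (m p) = s p * B i p)" by metis
  have ev: "eventually (\<lambda>p. P (m p) = (\<Sum>i<n. a i (m p) * b i (m p))) (nhds 0)"
    using ev_transfer[OF assms(2,3) f(2)] .
  show ?thesis
  proof (intro exI conjI)
    show "hgerm (\<lambda>p. \<Sum>i<n. A i p * B i p)" using A B by (intro hgerm_sum hgerm_mult) auto
    show "eventually (\<lambda>p. P (m p) = (s p)^2 * (\<Sum>i<n. A i p * B i p)) (nhds 0)"
      using ev
    proof eventually_elim
      case (elim p)
      then show ?case using A B by (simp add: sum_distrib_left power2_eq_square mult_ac)
    qed
  qed
qed

lemma ev_transfer_gen:
  fixes m :: "'a::t2_space \<Rightarrow> 'b::topological_space"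
  assumes "isCont m x" "m x = y" "eventually Q (nhds y)"
  shows "eventually (\<lambda>p. Q (m p)) (nhds x)"
proof -
  obtain S where S: "open S" "y \<in> S" "\<And>x. x \<in> S \<Longrightarrow> Q x" using assms(3) unfolding eventually_nhds by blast
  obtain T where T: "open T" "x \<in> T" "\<And>x. x \<in> T \<Longrightarrow> m x \<in> S"
    using assms(1) S(1,2) assms(2) unfolding continuous_at_open by metis
  show ?thesis unfolding eventually_nhds using T S by blast
qed

lemma isCont_line: "isCont (\<lambda>t. csc t v) t"
  unfolding csc_def by (intro continuous_intros)

lemma hom_part_cong:
  assumes "eventually (\<lambda>p. g p = h p) (nhds 0)"
  shows "hom_part k g v = hom_part k h v"
proof -
  have "eventually (\<lambda>t. g (csc t v) = h (csc t v)) (nhds 0)"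
    by (rule ev_transfer_gen[OF isCont_line _ assms]) simp
  then show ?thesis unfolding hom_part_def using higher_deriv_cong_ev by metis
qed

lemma hom_part_0: "hom_part 0 g v = g 0"
  by (simp add: hom_part_def)

lemma hom_part_1: "hom_part 1 g v = deriv (\<lambda>t. g (csc t v)) 0"
  by (simp add: hom_part_def)

lemma hgerm_line:
  assumes "hgerm g" shows "\<exists>d. ((\<lambda>t. g (csc t v)) has_field_derivative d) (at 0)"
proof -
  obtain U where U: "open U" "0 \<in> U" "\<And>p. p \<in> U \<Longrightarrow> \<exists>L. (g has_derivative L) (at p) \<and> clin L"
    using assms hgermE by blast
  then obtain L where "(g has_derivative L) (at 0)" "clin L" using U(3)[of 0] U(2) by blast
  then have "(g has_derivative L) (at (csc 0 v))" "clin L" by simp_all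
  from line_deriv[OF this] show ?thesis by blast
qed

lemma zc_cancel:
  assumes "hgerm H" "eventually (\<lambda>p. (snd (snd p))^c * H p = 0) (nhds 0)"
  shows "eventually (\<lambda>p. H p = 0) (nhds 0)"
proof -
  obtain U where U: "open U" "0 \<in> U" "continuous_on U H" using hgerm_cont_nhd assms(1) by blast
  obtain V where V: "open V" "0 \<in> V" "\<And>p. p \<in> V \<Longrightarrow> (snd (snd p))^c * H p = 0"
    using assms(2) unfolding eventually_nhds by blast
  have "H p = 0" if p: "p \<in> U \<inter> V" for p
  proof (cases "snd (snd p) = 0")
    case False then show ?thesis using V(3)[of p] p by simp
  next
    case True
    define m where "m s = p + (0, 0, s)" for s :: complex
    have cm: "isCont m 0" unfolding m_def by (intro continuous_intros)
    have "eventually (\<lambda>x. x \<in> U \<inter> V) (nhds p)"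
      by (rule eventually_nhds_in_open) (use p U V in auto)
    moreover have m0: "m 0 = p" by (simp add: m_def zero_prod_def)
    ultimately have "eventually (\<lambda>s. m s \<in> U \<inter> V) (nhds 0)"
      using ev_transfer_gen[OF cm m0] by blast
    then have "eventually (\<lambda>s. m s \<in> U \<inter> V) (at 0)"
      by (simp add: eventually_at_filter eventually_mono)
    moreover have "eventually (\<lambda>s. s \<noteq> 0) (at (0::complex))" by (simp add: eventually_at_filter)
    ultimately have ev: "eventually (\<lambda>s. H (m s) = 0) (at 0)"
    proof eventually_elim
      case (elim s)
      then have "snd (snd (m s)) \<noteq> 0" using True by (simp add: m_def)
      then show ?case using V(3)[of "m s"] elim by simp
    qed
    have "isCont H p" using U p continuous_on_eq_continuous_at by blast
    then have "isCont (\<lambda>s. H (m s)) 0"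
      using isCont_o2[OF cm, of H] m0 by simp
    then have l1: "(\<lambda>s. H (m s)) \<midarrow>0\<rightarrow> H p" using m0 unfolding isCont_def by simp
    have l2: "(\<lambda>s. H (m s)) \<midarrow>0\<rightarrow> 0" by (rule tendsto_eventually[OF ev])
    show ?thesis using LIM_unique[OF l1 l2] .
  qed
  then show ?thesis unfolding eventually_nhds using U V by (intro exI[of _ "U \<inter> V"]) auto
qed

definition Fhc :: "nat \<Rightarrow> complex \<Rightarrow> (c3 \<Rightarrow> complex) \<Rightarrow> (c3 \<Rightarrow> complex) \<Rightarrow> (c3 \<Rightarrow> complex) \<Rightarrow> c3 \<Rightarrow> c3" where
  "Fhc c \<beta> P Q R p = (fst p + (snd (snd p))^c * (fst p + P p),
      fst (snd p) + (snd (snd p))^(c+1) * (\<beta> + Q p), snd (snd p) + (snd (snd p))^(c+2) * R p)"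

lemma hc_facts:
  assumes "half_corner_form c \<beta> P Q R f"
  shows "0 < c" "in_m2 P" "in_m Q" "hgerm R" "eventually (\<lambda>p. f p = Fhc c \<beta> P Q R p) (nhds 0)"
proof -
  show "0 < c" "in_m2 P" "in_m Q" "hgerm R" using assms by (auto simp: half_corner_form_def)
  have "eventually (\<lambda>(x, y, z). f (x, y, z) =
        (x + z ^ c * (x + P (x, y, z)),
         y + z ^ (c + 1) * (\<beta> + Q (x, y, z)),
         z + z ^ (c + 2) * R (x, y, z))) (nhds 0)" using assms by (simp add: half_corner_form_def)
  then show "eventually (\<lambda>p. f p = Fhc c \<beta> P Q R p) (nhds 0)"
    by (rule eventually_mono) (auto simp: Fhc_def case_prod_unfold)
qed

definition G0 :: "complex \<Rightarrow> (c3 \<Rightarrow> complex) \<Rightarrow> (c3 \<Rightarrow> complex) \<Rightarrow> (c3 \<Rightarrow> complex) \<Rightarrow> c3 \<Rightarrow> c3" where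
  "G0 \<beta> P Q R p = (fst p + P p, snd (snd p) * (\<beta> + Q p), (snd (snd p))^2 * R p)"

lemma Fhc_G0: "Fhc c \<beta> P Q R p - p = csc ((snd (snd p))^c) (G0 \<beta> P Q R p)"
  by (simp add: Fhc_def G0_def csc_def prod_eq_iff power_add power2_eq_square algebra_simps)

lemma G0_hgerm:
  assumes "in_m2 P" "in_m Q" "hgerm R" shows "hgerm_map (G0 \<beta> P Q R)"
  using assms in_m2_hgerm[OF assms(1)] unfolding hgerm_map_def G0_def in_m_def
  by (auto intro!: hgerm_add hgerm_mult hgerm_power)

lemma G_unique:
  assumes "hgerm_map G" "hgerm_map G'"
    "eventually (\<lambda>p. csc ((snd (snd p))^c) (G p) = csc ((snd (snd p))^c) (G' p)) (nhds 0)"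
  shows "eventually (\<lambda>p. fst (G p) = fst (G' p)) (nhds 0)"
    "eventually (\<lambda>p. fst (snd (G p)) = fst (snd (G' p))) (nhds 0)"
    "eventually (\<lambda>p. snd (snd (G p)) = snd (snd (G' p))) (nhds 0)"
proof -
  have h: "hgerm (\<lambda>p. fst (G p) - fst (G' p))" "hgerm (\<lambda>p. fst (snd (G p)) - fst (snd (G' p)))"
    "hgerm (\<lambda>p. snd (snd (G p)) - snd (snd (G' p)))"
    using assms(1,2) unfolding hgerm_map_def by auto
  have "eventually (\<lambda>p. (snd (snd p))^c * (fst (G p) - fst (G' p)) = 0) (nhds 0)"
    using assms(3) by eventually_elim (simp add: csc_def right_diff_distrib)
  from zc_cancel[OF h(1) this] show "eventually (\<lambda>p. fst (G p) = fst (G' p)) (nhds 0)" by simp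
  have "eventually (\<lambda>p. (snd (snd p))^c * (fst (snd (G p)) - fst (snd (G' p))) = 0) (nhds 0)"
    using assms(3) by eventually_elim (simp add: csc_def right_diff_distrib)
  from zc_cancel[OF h(2) this] show "eventually (\<lambda>p. fst (snd (G p)) = fst (snd (G' p))) (nhds 0)" by simp
  have "eventually (\<lambda>p. (snd (snd p))^c * (snd (snd (G p)) - snd (snd (G' p))) = 0) (nhds 0)"
    using assms(3) by eventually_elim (simp add: csc_def right_diff_distrib)
  from zc_cancel[OF h(3) this] show "eventually (\<lambda>p. snd (snd (G p)) = snd (snd (G' p))) (nhds 0)" by simp
qed

lemma lowest_hom_cong:
  assumes "eventually (\<lambda>p. fst (G p) = fst (G' p)) (nhds 0)"
    "eventually (\<lambda>p. fst (snd (G p)) = fst (snd (G' p))) (nhds 0)"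
    "eventually (\<lambda>p. snd (snd (G p)) = snd (snd (G' p))) (nhds 0)"
  shows "lowest_hom G = lowest_hom G'"
proof -
  have "hom_part_map k G = hom_part_map k G'" for k
    unfolding hom_part_map_def using hom_part_cong[OF assms(1)] hom_part_cong[OF assms(2)]
      hom_part_cong[OF assms(3)] by presburger
  then show ?thesis unfolding lowest_hom_def by presburger
qed

lemma m2_line_deriv:
  assumes "in_m2 P"
  shows "((\<lambda>t. P (csc t w)) has_field_derivative 0) (at 0)"
proof -
  obtain n :: nat and a b where f: "\<forall>i<n. in_m (a i) \<and> in_m (b i)"
    "eventually (\<lambda>p. P p = (\<Sum>i<n. a i p * b i p)) (nhds 0)"
    using in_m2_E[OF assms] by blast
  have ev: "eventually (\<lambda>t. P (csc t w) = (\<Sum>i<n. a i (csc t w) * b i (csc t w))) (nhds 0)"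
    using ev_transfer_gen[OF isCont_line _ f(2), of 0 w] by simp
  have "((\<lambda>t. a i (csc t w) * b i (csc t w)) has_field_derivative 0) (at 0)" if "i < n" for i
  proof -
    have "hgerm (a i)" "hgerm (b i)" "a i 0 = 0" "b i 0 = 0" using f(1) that by (auto simp: in_m_def)
    then obtain da db where "((\<lambda>t. a i (csc t w)) has_field_derivative da) (at 0)"
        "((\<lambda>t. b i (csc t w)) has_field_derivative db) (at 0)"
      using hgerm_line by metis
    from DERIV_mult[OF this] show ?thesis using \<open>a i 0 = 0\<close> \<open>b i 0 = 0\<close> by simp
  qed
  then have "((\<lambda>t. \<Sum>i<n. a i (csc t w) * b i (csc t w)) has_field_derivative (\<Sum>i<n. 0)) (at 0)"
    by (intro DERIV_sum) auto
  then have "((\<lambda>t. \<Sum>i<n. a i (csc t w) * b i (csc t w)) has_field_derivative 0) (at 0)" by simp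
  then show ?thesis using DERIV_cong_ev[OF refl ev refl] by simp
qed

lemma lt: "((\<lambda>t. t * k) has_field_derivative k) (at x)"
  using DERIV_cmult[OF DERIV_ident, of k] by (simp add: mult.commute)

lemma G0_hom:
  assumes "in_m2 P" "in_m Q" "hgerm R"
  shows "hom_part_map 0 (G0 \<beta> P Q R) w = 0"
    "hom_part_map 1 (G0 \<beta> P Q R) w = (fst w, \<beta> * snd (snd w), 0)"
proof -
  show "hom_part_map 0 (G0 \<beta> P Q R) w = 0"
    using in_m2_at0[OF assms(1)] by (simp add: hom_part_map_def hom_part_0 G0_def zero_prod_def)
  have Q0: "Q 0 = 0" and hQ: "hgerm Q" using assms(2) by (auto simp: in_m_def)
  have d1: "((\<lambda>t. fst (G0 \<beta> P Q R (csc t w))) has_field_derivative fst w) (at 0)"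
  proof -
    have l: "((\<lambda>t. t * fst w) has_field_derivative fst w) (at 0)"
      using DERIV_cmult[OF DERIV_ident, of "fst w"] by (simp add: mult.commute)
    have "((\<lambda>t. t * fst w + P (csc t w)) has_field_derivative (fst w + 0)) (at 0)"
      by (rule DERIV_add[OF l m2_line_deriv[OF assms(1)]])
    then show ?thesis by (simp add: G0_def)
  qed
  have d2: "((\<lambda>t. fst (snd (G0 \<beta> P Q R (csc t w)))) has_field_derivative \<beta> * snd (snd w)) (at 0)"
  proof -
    obtain dq where dq: "((\<lambda>t. Q (csc t w)) has_field_derivative dq) (at 0)" using hgerm_line[OF hQ] by blast
    have "((\<lambda>t. (t * snd (snd w)) * (\<beta> + Q (csc t w))) has_field_derivative
        snd (snd w) * (\<beta> + Q (csc 0 w)) + (0 + dq) * (0 * snd (snd w))) (at 0)"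
      by (intro DERIV_mult DERIV_add DERIV_const lt dq)
    then show ?thesis using Q0 by (simp add: G0_def mult.commute)
  qed
  have d3: "((\<lambda>t. snd (snd (G0 \<beta> P Q R (csc t w)))) has_field_derivative 0) (at 0)"
  proof -
    obtain dr where dr: "((\<lambda>t. R (csc t w)) has_field_derivative dr) (at 0)" using hgerm_line[OF assms(3)] by blast
    have "((\<lambda>t. ((t * snd (snd w)) * (t * snd (snd w))) * R (csc t w)) has_field_derivative
        (snd (snd w) * (0 * snd (snd w)) + snd (snd w) * (0 * snd (snd w))) * R (csc 0 w) + dr * ((0 * snd (snd w)) * (0 * snd (snd w)))) (at 0)"
      by (intro DERIV_mult lt dr)
    then show ?thesis by (simp add: G0_def power2_eq_square)
  qed
  show "hom_part_map 1 (G0 \<beta> P Q R) w = (fst w, \<beta> * snd (snd w), 0)"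
    unfolding hom_part_map_def hom_part_1 using DERIV_imp_deriv[OF d1] DERIV_imp_deriv[OF d2] DERIV_imp_deriv[OF d3]
    by simp
qed

lemma G0_lowest:
  assumes "in_m2 P" "in_m Q" "hgerm R"
  shows "lowest_hom (G0 \<beta> P Q R) w = (fst w, \<beta> * snd (snd w), 0)"
proof -
  have "(LEAST k. \<exists>w. hom_part_map k (G0 \<beta> P Q R) w \<noteq> 0) = 1"
  proof (rule Least_equality)
    show "\<exists>w. hom_part_map 1 (G0 \<beta> P Q R) w \<noteq> 0"
      using G0_hom(2)[OF assms, of \<beta> "(1,0,0)"] by (intro exI[of _ "(1,0,0)"]) (simp add: zero_prod_def)
    fix k assume "\<exists>w. hom_part_map k (G0 \<beta> P Q R) w \<noteq> 0"
    then show "1 \<le> k" using G0_hom(1)[OF assms] by (cases k) auto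
  qed
  then show ?thesis unfolding lowest_hom_def using G0_hom(2)[OF assms] by simp
qed

lemma sing_iff:
  assumes hc: "half_corner_form c \<beta> P Q R f"
  shows "singular_dir f c v lam \<longleftrightarrow> v \<noteq> 0 \<and> (fst v, \<beta> * snd (snd v), 0) = csc lam v"
proof -
  note H = hc_facts[OF hc]
  have ev0: "eventually (\<lambda>p. f p - p = csc ((snd (snd p))^c) (G0 \<beta> P Q R p)) (nhds 0)"
    using H(5) by eventually_elim (simp add: Fhc_G0)
  have hG0: "hgerm_map (G0 \<beta> P Q R)" using G0_hgerm[OF H(2-4)] .
  show ?thesis
  proof
    assume "singular_dir f c v lam"
    then obtain G where G: "v \<noteq> 0" "hgerm_map G" "eventually (\<lambda>p. f p - p = csc ((snd (snd p))^c) (G p)) (nhds 0)"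
      "lowest_hom G v = csc lam v" unfolding singular_dir_def by blast
    have "eventually (\<lambda>p. csc ((snd (snd p))^c) (G p) = csc ((snd (snd p))^c) (G0 \<beta> P Q R p)) (nhds 0)"
      using G(3) ev0 by eventually_elim simp
    from lowest_hom_cong[OF G_unique[OF G(2) hG0 this]] have "lowest_hom G = lowest_hom (G0 \<beta> P Q R)" .
    then show "v \<noteq> 0 \<and> (fst v, \<beta> * snd (snd v), 0) = csc lam v"
      using G(1,4) G0_lowest[OF H(2-4)] by simp
  next
    assume "v \<noteq> 0 \<and> (fst v, \<beta> * snd (snd v), 0) = csc lam v"
    then show "singular_dir f c v lam" unfolding singular_dir_def
      using hG0 ev0 G0_lowest[OF H(2-4)] by (intro conjI exI[of _ "G0 \<beta> P Q R"]) auto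
  qed
qed

lemma sing_set:
  assumes hc: "half_corner_form c \<beta> P Q R f"
  shows "{v. \<exists>lam. singular_dir f c v lam} =
           cline (1, 0, 0) \<union> cline (0, 1, 0) \<union> {v. \<beta> = 0 \<and> (\<exists>y0. v \<in> cline (0, y0, 1))}"
proof -
  have "(\<exists>lam. singular_dir f c v lam) \<longleftrightarrow>
      v \<in> cline (1, 0, 0) \<union> cline (0, 1, 0) \<union> {v. \<beta> = 0 \<and> (\<exists>y0. v \<in> cline (0, y0, 1))}" for v
  proof (cases v)
    case (fields x y z)
    have "(\<exists>lam. singular_dir f c v lam) \<longleftrightarrow> v \<noteq> 0 \<and> (\<exists>lam. x = lam * x \<and> \<beta> * z = lam * y \<and> 0 = lam * z)"
      unfolding sing_iff[OF hc] by (simp add: fields csc_def)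
    also have "\<dots> \<longleftrightarrow> v \<in> cline (1, 0, 0) \<union> cline (0, 1, 0) \<union> {v. \<beta> = 0 \<and> (\<exists>y0. v \<in> cline (0, y0, 1))}"
    proof
      assume A: "v \<noteq> 0 \<and> (\<exists>lam. x = lam * x \<and> \<beta> * z = lam * y \<and> 0 = lam * z)"
      then obtain lam where l: "x = lam * x" "\<beta> * z = lam * y" "0 = lam * z" by blast
      have nz: "\<not> (x = 0 \<and> y = 0 \<and> z = 0)" using A by (simp add: fields zero_prod_def)
      show "v \<in> cline (1, 0, 0) \<union> cline (0, 1, 0) \<union> {v. \<beta> = 0 \<and> (\<exists>y0. v \<in> cline (0, y0, 1))}"
      proof (cases "x = 0")
        case False
        then have "lam = 1" using l(1) by (metis mult_cancel_right2)
        then have "z = 0" "y = 0" using l by auto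
        then have "v \<in> cline (1, 0, 0)" using False unfolding cline_def
          by (auto simp: fields csc_def intro!: exI[of _ x])
        then show ?thesis by blast
      next
        case True
        have "lam = 0"
        proof (rule ccontr)
          assume "lam \<noteq> 0"
          then have "z = 0" using l(3) by simp
          then have "y = 0" using l(2) \<open>lam \<noteq> 0\<close> by simp
          then show False using nz True \<open>z = 0\<close> by simp
        qed
        then have bz: "\<beta> * z = 0" using l(2) by simp
        show ?thesis
        proof (cases "z = 0")
          case True
          then have "y \<noteq> 0" using nz \<open>x = 0\<close> by simp
          then have "v \<in> cline (0, 1, 0)" using True \<open>x = 0\<close> unfolding cline_def
            by (auto simp: fields csc_def intro!: exI[of _ y])
          then show ?thesis by blast
        next
          case False
          then have "\<beta> = 0" using bz by simp
          moreover have "v \<in> cline (0, y / z, 1)" using False \<open>x = 0\<close> unfolding cline_def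
            by (auto simp: fields csc_def intro!: exI[of _ z])
          ultimately show ?thesis by blast
        qed
      qed
    next
      assume "v \<in> cline (1, 0, 0) \<union> cline (0, 1, 0) \<union> {v. \<beta> = 0 \<and> (\<exists>y0. v \<in> cline (0, y0, 1))}"
      then consider (a) t where "t \<noteq> 0" "v = (t, 0, 0)" | (b) t where "t \<noteq> 0" "v = (0, t, 0)"
        | (c) t y0 where "\<beta> = 0" "t \<noteq> 0" "v = (0, t * y0, t)"
        unfolding cline_def csc_def by auto
      then show "v \<noteq> 0 \<and> (\<exists>lam. x = lam * x \<and> \<beta> * z = lam * y \<and> 0 = lam * z)"
      proof cases
        case a then show ?thesis by (intro conjI exI[of _ 1]) (auto simp: fields zero_prod_def)
      next
        case b then show ?thesis by (intro conjI exI[of _ 0]) (auto simp: fields zero_prod_def)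
      next
        case c then show ?thesis by (intro conjI exI[of _ 0]) (auto simp: fields zero_prod_def)
      qed
    qed
    finally show ?thesis .
  qed
  then show ?thesis by blast
qed

lemma sing_degen:
  assumes hc: "half_corner_form c \<beta> P Q R f"
  shows "\<beta> = 0 \<longrightarrow> (\<forall>y0. \<not> exceptional_dir (0, y0, 1) \<and> degenerate_dir f c (0, y0, 1))"
  unfolding degenerate_dir_def exceptional_dir_def sing_iff[OF hc]
  by (auto simp: csc_def zero_prod_def)

definition sw23 :: "c3 \<Rightarrow> c3" where "sw23 p = (fst p, snd (snd p), fst (snd p))"

lemma sw23_sw23[simp]: "sw23 (sw23 p) = p" by (simp add: sw23_def)
lemma sw23_0[simp]: "sw23 0 = 0" by (simp add: sw23_def zero_prod_def)

lemmas hg = hgerm_const hgerm_px hgerm_py hgerm_pz hgerm_add hgerm_mult hgerm_diff hgerm_minus hgerm_power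

lemma hgerm_sw23: "hgerm F \<Longrightarrow> hgerm (\<lambda>p. F (sw23 p))"
  unfolding sw23_def by (rule hgerm_compose) (simp_all add: hgerm_px hgerm_py hgerm_pz)

lemma hgerm_map_sw23: "hgerm_map sw23"
  unfolding hgerm_map_def sw23_def by (simp add: hgerm_px hgerm_py hgerm_pz)

lemma loc_biholo_sw23: "loc_biholo sw23 sw23"
  by (simp add: loc_biholo_def hgerm_map_sw23)

lemma not_pos_rat_neg1: "\<not> (\<exists>q::rat. q > 0 \<and> (-1::complex) = 1 * of_rat q)"
proof
  assume "\<exists>q::rat. q > 0 \<and> (-1::complex) = 1 * of_rat q"
  then obtain q :: rat where q: "q > 0" "(-1::complex) = 1 * of_rat q" by blast
  have "(of_rat q :: complex) = of_rat (-1)" using q(2) by (metis mult_1 of_rat_1 of_rat_minus)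
  then have "q = -1" by (simp only: of_rat_eq_iff)
  then show False using q(1) by simp
qed

lemma t1: "x + (x * v)^c * (x + x^2 * P) = x * (1 + x^c * v^c * (1 + x * P))" for x v P :: complex
  by (simp add: power_mult_distrib power2_eq_square distrib_left distrib_right mult_ac)
lemma t2: "x * u + (x * v)^(c+1) * (b + Q) = x * (u + x^c * v^(c+1) * (b + Q))" for x v u b Q :: complex
  by (simp add: power_mult_distrib distrib_left mult_ac)
lemma t3: "x * v + (x * v)^(c+2) * R = x * (v * (1 + x^(c+1) * v^(c+1) * R))" for x v R :: complex
  by (simp add: power_mult_distrib distrib_left mult_ac)

lemma s1: "x * (1 + x^c * y^c * (1 + E)) = x + x^c * y^c * z^0 * (x * (1 + E))" for x y z E :: complex
  by (simp add: distrib_left distrib_right mult_ac)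
lemma s2: fixes x y z E R D :: complex assumes "D \<noteq> 0" "D = 1 + x^c * y^c * (1 + E)"
  shows "y * (1 + x^(c+1) * y^(c+1) * R) / D = y + x^c * y^c * z^0 * (y * (-1 + (x * y * R - E + x^c * y^c * (1 + E)) / D))"
proof -
  have "y + x^c * y^c * z^0 * (y * (-1 + (x * y * R - E + x^c * y^c * (1 + E)) / D)) =
     (y * D + x^c * y^c * (y * (- D + (x * y * R - E + x^c * y^c * (1 + E))))) / D"
    using assms(1) by (simp add: field_simps)
  also have "\<dots> = y * (1 + x^(c+1) * y^(c+1) * R) / D"
    unfolding assms(2) by (simp add: algebra_simps)
  finally show ?thesis by simp
qed
lemma s3: fixes x y z E Q b D :: complex assumes "D \<noteq> 0" "D = 1 + x^c * y^c * (1 + E)"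
  shows "(z + x^c * y^(c+1) * (b + Q)) / D = z + x^c * y^c * z^0 * ((y * (b + Q) - z * (1 + E)) / D)"
proof -
  have "z + x^c * y^c * z^0 * ((y * (b + Q) - z * (1 + E)) / D) = (z * D + x^c * y^c * (y * (b + Q) - z * (1 + E))) / D"
    using assms(1) by (simp add: field_simps)
  also have "\<dots> = (z + x^c * y^(c+1) * (b + Q)) / D"
    unfolding assms(2) by (simp add: algebra_simps)
  finally show ?thesis by simp
qed

lemma isCont_sw23: "isCont sw23 x" unfolding sw23_def by (intro continuous_intros)

lemma chart1:
  assumes hc: "half_corner_form c \<beta> P Q R f"
  shows "\<exists>g. lift_chart1 f g \<and> is_simple_corner g"
proof -
  note H = hc_facts[OF hc]
  define m1 where "m1 p = (fst p, fst p * fst (snd p), fst p * snd (snd p))" for p :: c3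
  have cm1: "isCont m1 0" unfolding m1_def by (intro continuous_intros)
  have m10: "m1 0 = 0" by (simp add: m1_def zero_prod_def)
  have "\<exists>A. hgerm A \<and> (\<forall>p. a (m1 p) = fst p * A p)" if ha: "hgerm a" "a 0 = 0" for a
  proof -
    obtain A where A: "hgerm A" "\<And>x u v. a (x, x * u, x * v) = x * A (x, u, v)" using div1[OF ha] by blast
    show ?thesis using A by (intro exI[of _ A]) (simp add: m1_def)
  qed
  from m2_chart[OF H(2) cm1 m10 this] obtain Ph where Ph: "hgerm Ph"
    "eventually (\<lambda>p. P (m1 p) = (fst p)^2 * Ph p) (nhds 0)" by blast
  have hQ: "hgerm Q" "Q 0 = 0" using H(3) by (auto simp: in_m_def)
  define Q1 where "Q1 p = Q (m1 p)" for p
  define R1 where "R1 p = R (m1 p)" for p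
  have hQ1: "hgerm Q1" unfolding Q1_def m1_def by (rule hgerm_compose[OF hQ(1)]) (intro hg | simp)+
  have hR1: "hgerm R1" unfolding R1_def m1_def by (rule hgerm_compose[OF H(4)]) (intro hg | simp)+
  have Q10: "Q1 0 = 0" using hQ(2) m10 by (simp add: Q1_def)
  define E where "E p = fst p * Ph p" for p
  have hE: "hgerm E" unfolding E_def by (intro hg Ph(1))
  have E0: "E 0 = 0" by (simp add: E_def)
  define D1 where "D1 p = 1 + (fst p)^c * (snd (snd p))^c * (1 + E p)" for p
  have hD1: "hgerm D1" unfolding D1_def by (intro hg hE)
  have D10: "D1 0 = 1" using H(1) by (simp add: D1_def)
  have evD1: "eventually (\<lambda>p. D1 p \<noteq> 0) (nhds 0)" using hgerm_ev_nonzero[OF hD1] D10 by simp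
  define g where "g p = (fst p * D1 p,
      (fst (snd p) + (fst p)^c * (snd (snd p))^(c+1) * (\<beta> + Q1 p)) / D1 p,
      snd (snd p) * (1 + (fst p)^(c+1) * (snd (snd p))^(c+1) * R1 p) / D1 p)" for p
  have hgg: "hgerm_map g" unfolding hgerm_map_def g_def using D10
    by (simp add: hgerm_divide hg hD1 hQ1 hR1)
  have lift: "lift_chart1 f g"
  proof -
    have ev: "eventually (\<lambda>p. fst p \<noteq> 0 \<longrightarrow>
        (let q = f (fst p, fst p * fst (snd p), fst p * snd (snd p)) in fst q \<noteq> 0 \<and>
          g p = (fst q, fst (snd q) / fst q, snd (snd q) / fst q))) (nhds 0)"
      using ev_transfer[OF cm1 m10 H(5)] Ph(2) evD1
    proof eventually_elim
      case (elim p)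
      obtain x u v where p: "p = (x, u, v)" by (cases p)
      have m1p: "m1 p = (x, x * u, x * v)" by (simp add: m1_def p)
      have "f (x, x * u, x * v) = (x + (x * v)^c * (x + x^2 * Ph p), x * u + (x * v)^(c+1) * (\<beta> + Q1 p),
          x * v + (x * v)^(c+2) * R1 p)"
        using elim(1,2) unfolding m1p by (simp add: Fhc_def Q1_def R1_def m1_def p)
      also have "\<dots> = (x * D1 p, x * (u + x^c * v^(c+1) * (\<beta> + Q1 p)),
          x * (v * (1 + x^(c+1) * v^(c+1) * R1 p)))"
        unfolding t1 t2 t3 by (simp add: D1_def E_def p)
      finally have fq: "f (x, x * u, x * v) = (x * D1 p, x * (u + x^c * v^(c+1) * (\<beta> + Q1 p)),
          x * (v * (1 + x^(c+1) * v^(c+1) * R1 p)))" .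
      show ?case
      proof (intro impI)
        assume x0: "fst p \<noteq> 0"
        then have x0': "x \<noteq> 0" by (simp add: p)
        have D0: "D1 p \<noteq> 0" using elim(3) .
        have pc: "fst p = x" "fst (snd p) = u" "snd (snd p) = v" by (simp_all add: p)
        have gp: "g p = (x * D1 p, (u + x^c * v^(c+1) * (\<beta> + Q1 p)) / D1 p,
            v * (1 + x^(c+1) * v^(c+1) * R1 p) / D1 p)" by (simp add: g_def pc)
        show "let q = f (fst p, fst p * fst (snd p), fst p * snd (snd p)) in fst q \<noteq> 0 \<and>
          g p = (fst q, fst (snd q) / fst q, snd (snd q) / fst q)"
          unfolding Let_def pc fq gp using x0' D0 by simp
      qed
    qed
    show ?thesis unfolding lift_chart1_def using hgg ev by (simp add: case_prod_unfold)
  qed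
  define h where "h p = sw23 (g (sw23 p))" for p
  define P1 where "P1 p = E (sw23 p)" for p
  define Q1' where "Q1' p = (fst p * fst (snd p) * R1 (sw23 p) - E (sw23 p) +
     (fst p)^c * (fst (snd p))^c * (1 + E (sw23 p))) / D1 (sw23 p)" for p
  define R1' where "R1' p = (fst (snd p) * (\<beta> + Q1 (sw23 p)) - snd (snd p) * (1 + E (sw23 p))) / D1 (sw23 p)" for p
  have hE': "hgerm (\<lambda>p. E (sw23 p))" "hgerm (\<lambda>p. R1 (sw23 p))" "hgerm (\<lambda>p. Q1 (sw23 p))" "hgerm (\<lambda>p. D1 (sw23 p))"
    using hgerm_sw23 hE hR1 hQ1 hD1 by auto
  have D1s0: "D1 (sw23 0) = 1" using D10 by simp
  have mP1: "in_m P1" unfolding in_m_def P1_def using hE'(1) E0 by simp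
  have "hgerm Q1'" unfolding Q1'_def
    by (rule hgerm_divide) (intro hg hE', rule hE'(4), simp add: D1s0 D10)
  moreover have "Q1' 0 = 0" unfolding Q1'_def using H(1) E0 D1s0 by (simp add: zero_prod_def sw23_def)
  ultimately have mQ1': "in_m Q1'" unfolding in_m_def by simp
  have "hgerm R1'" unfolding R1'_def
    by (rule hgerm_divide) (intro hg hE', rule hE'(4), simp add: D1s0 D10)
  moreover have "R1' 0 = 0" unfolding R1'_def using H(1) E0 D1s0 by (simp add: zero_prod_def sw23_def)
  ultimately have mR1': "in_m R1'" unfolding in_m_def by simp
  have evD1s: "eventually (\<lambda>p. D1 (sw23 p) \<noteq> 0) (nhds 0)"
    using ev_transfer[OF isCont_sw23 sw23_0 evD1] .
  have evh: "eventually (\<lambda>p. h p = (fst p + (fst p)^c * (fst (snd p))^c * (snd (snd p))^0 * (fst p * (1 + P1 p)),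
       fst (snd p) + (fst p)^c * (fst (snd p))^c * (snd (snd p))^0 * (fst (snd p) * (-1 + Q1' p)),
       snd (snd p) + (fst p)^c * (fst (snd p))^c * (snd (snd p))^0 * R1' p)) (nhds 0)"
    using evD1s
  proof eventually_elim
    case (elim p)
    obtain x y z where p: "p = (x, y, z)" by (cases p)
    have sp: "sw23 p = (x, z, y)" by (simp add: p sw23_def)
    have Dp: "D1 (sw23 p) = 1 + x^c * y^c * (1 + E (sw23 p))" by (simp add: D1_def sp)
    have hp: "h p = (x * D1 (sw23 p), y * (1 + x^(c+1) * y^(c+1) * R1 (sw23 p)) / D1 (sw23 p),
        (z + x^c * y^(c+1) * (\<beta> + Q1 (sw23 p))) / D1 (sw23 p))"
      by (simp add: h_def g_def sw23_def p)
    show ?case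
      unfolding hp P1_def Q1'_def R1'_def
      using s1[of x c y "E (sw23 p)" z] s2[OF elim Dp, of "R1 (sw23 p)" z] s3[OF elim Dp, of z \<beta> "Q1 (sw23 p)"] Dp
      by (simp add: p)
  qed
  have sc: "simple_corner_form c c 0 1 (-1) P1 Q1' R1' h"
    unfolding simple_corner_form_def
    using H(1) not_pos_rat_neg1 mP1 mQ1' mR1' evh by (simp add: case_prod_unfold)
  have cj: "conj_to g h"
    unfolding conj_to_def
    by (intro exI[of _ sw23] conjI loc_biholo_sw23) (simp add: h_def)
  show ?thesis using lift sc cj unfolding is_simple_corner_def by blast
qed

definition shy :: "complex \<Rightarrow> c3 \<Rightarrow> c3" where
  "shy a p = (fst p + a * fst (snd p), fst (snd p), snd (snd p))"

lemma shy_inv[simp]: "shy (-a) (shy a p) = p" "shy a (shy (-a) p) = p"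
  by (simp_all add: shy_def)

lemma shy_0[simp]: "shy a 0 = 0" by (simp add: shy_def zero_prod_def)

lemma isCont_shy: "isCont (shy a) x" unfolding shy_def by (intro continuous_intros)

lemma hgerm_shy: "hgerm F \<Longrightarrow> hgerm (\<lambda>p. F (shy a p))"
  unfolding shy_def by (rule hgerm_compose) (intro hg | simp)+

lemma hgerm_map_shy: "hgerm_map (shy a)"
  unfolding hgerm_map_def shy_def by (simp, intro conjI hg)

lemma loc_biholo_shy: "loc_biholo (shy a) (shy (-a))"
  by (simp add: loc_biholo_def hgerm_map_shy)

lemma l1: "u * y + (v * y)^c * (u * y + y^2 * Ph) = y * (u + v^c * y^c * (u + y * Ph))" for u y v Ph :: complex
  by (simp add: power_mult_distrib power2_eq_square distrib_left distrib_right mult_ac)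
lemma l2: "y + (v * y)^(c+1) * (b + Q) = y * (1 + v^(c+1) * y^c * (b + Q))" for y v b Q :: complex
  by (simp add: power_mult_distrib distrib_left mult_ac)
lemma l3: "v * y + (v * y)^(c+2) * R = y * (v * (1 + v^(c+1) * y^(c+1) * R))" for y v R :: complex
  by (simp add: power_mult_distrib distrib_left mult_ac)
lemma sp1:
  fixes x y z b Q Ph D \<alpha> :: complex
  assumes "D \<noteq> 0" "D = 1 + z^(c+1) * y^c * (b + Q)"
  shows "((x - \<alpha> * y) + z^c * y^c * ((x - \<alpha> * y) + y * Ph)) / D + \<alpha> * (y * D) =
    x + y^c * z^c * (x + (y * (Ph - \<alpha>) + z * ((b + Q) * (- (x - \<alpha> * y) + \<alpha> * y * D - x * y^c * z^c))) / D)"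
proof -
  have "x + y^c * z^c * (x + (y * (Ph - \<alpha>) + z * ((b + Q) * (- (x - \<alpha> * y) + \<alpha> * y * D - x * y^c * z^c))) / D)
     = (x * D + y^c * z^c * (x * D + (y * (Ph - \<alpha>) + z * ((b + Q) * (- (x - \<alpha> * y) + \<alpha> * y * D - x * y^c * z^c))))) / D"
    using assms(1) by (simp add: field_simps)
  also have "\<dots> = (((x - \<alpha> * y) + z^c * y^c * ((x - \<alpha> * y) + y * Ph)) + \<alpha> * (y * D) * D) / D"
    unfolding assms(2) by (simp add: algebra_simps)
  also have "\<dots> = ((x - \<alpha> * y) + z^c * y^c * ((x - \<alpha> * y) + y * Ph)) / D + \<alpha> * (y * D)"
    using assms(1) by (simp add: field_simps)
  finally show ?thesis by simp
qed
lemma sp2: "y * (1 + z^(c+1) * y^c * (b + Q)) = y + y^(c+1) * z^c * (z * (b + Q))" for y z b Q :: complex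
  by (simp add: algebra_simps)
lemma sp3:
  fixes y z b Q R D :: complex
  assumes "D \<noteq> 0" "D = 1 + z^(c+1) * y^c * (b + Q)"
  shows "z * (1 + z^(c+1) * y^(c+1) * R) / D = z + y^c * z^(c+1) * (z * (y * R - b - Q) / D)"
proof -
  have "z + y^c * z^(c+1) * (z * (y * R - b - Q) / D) = (z * D + y^c * z^(c+1) * (z * (y * R - b - Q))) / D"
    using assms(1) by (simp add: field_simps)
  also have "\<dots> = z * (1 + z^(c+1) * y^(c+1) * R) / D"
    unfolding assms(2) by (simp add: algebra_simps power2_eq_square)
  finally show ?thesis by simp
qed

lemma chart2:
  assumes hc: "half_corner_form c \<beta> P Q R f"
  shows "\<exists>g. lift_chart2 f g \<and> is_spinning_corner g"
proof -
  note H = hc_facts[OF hc]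
  define m2 where "m2 p = (fst p * fst (snd p), fst (snd p), snd (snd p) * fst (snd p))" for p :: c3
  have cm2: "isCont m2 0" unfolding m2_def by (intro continuous_intros)
  have m20: "m2 0 = 0" by (simp add: m2_def zero_prod_def)
  have "\<exists>A. hgerm A \<and> (\<forall>p. a (m2 p) = fst (snd p) * A p)" if ha: "hgerm a" "a 0 = 0" for a
  proof -
    obtain A where A: "hgerm A" "\<And>u y v. a (u * y, y, v * y) = y * A (u, y, v)" using div2[OF ha] by blast
    show ?thesis using A by (intro exI[of _ A]) (simp add: m2_def)
  qed
  from m2_chart[OF H(2) cm2 m20 this] obtain Ph where Ph: "hgerm Ph"
    "eventually (\<lambda>p. P (m2 p) = (fst (snd p))^2 * Ph p) (nhds 0)" by blast
  have hQ: "hgerm Q" "Q 0 = 0" using H(3) by (auto simp: in_m_def)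
  define Q2 where "Q2 p = Q (m2 p)" for p
  define R2 where "R2 p = R (m2 p)" for p
  have hQ2: "hgerm Q2" unfolding Q2_def m2_def by (rule hgerm_compose[OF hQ(1)]) (intro hg | simp)+
  have hR2: "hgerm R2" unfolding R2_def m2_def by (rule hgerm_compose[OF H(4)]) (intro hg | simp)+
  have Q20: "Q2 0 = 0" using hQ(2) m20 by (simp add: Q2_def)
  define D2 where "D2 p = 1 + (snd (snd p))^(c+1) * (fst (snd p))^c * (\<beta> + Q2 p)" for p
  have hD2: "hgerm D2" unfolding D2_def by (intro hg hQ2)
  have D20: "D2 0 = 1" using H(1) by (simp add: D2_def)
  have evD2: "eventually (\<lambda>p. D2 p \<noteq> 0) (nhds 0)" using hgerm_ev_nonzero[OF hD2] D20 by simp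
  define g where "g p = ((fst p + (snd (snd p))^c * (fst (snd p))^c * (fst p + fst (snd p) * Ph p)) / D2 p,
      fst (snd p) * D2 p,
      snd (snd p) * (1 + (snd (snd p))^(c+1) * (fst (snd p))^(c+1) * R2 p) / D2 p)" for p
  have hgg: "hgerm_map g" unfolding hgerm_map_def g_def using D20
    by (simp add: hgerm_divide hg hD2 hQ2 hR2 Ph(1))
  have lift: "lift_chart2 f g"
  proof -
    have ev: "eventually (\<lambda>p. fst (snd p) \<noteq> 0 \<longrightarrow>
        (let q = f (fst p * fst (snd p), fst (snd p), snd (snd p) * fst (snd p)) in fst (snd q) \<noteq> 0 \<and>
          g p = (fst q / fst (snd q), fst (snd q), snd (snd q) / fst (snd q)))) (nhds 0)"
      using ev_transfer[OF cm2 m20 H(5)] Ph(2) evD2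
    proof eventually_elim
      case (elim p)
      obtain u y v where p: "p = (u, y, v)" by (cases p)
      have m2p: "m2 p = (u * y, y, v * y)" by (simp add: m2_def p)
      have "f (u * y, y, v * y) = (u * y + (v * y)^c * (u * y + y^2 * Ph p), y + (v * y)^(c+1) * (\<beta> + Q2 p),
          v * y + (v * y)^(c+2) * R2 p)"
        using elim(1,2) unfolding m2p by (simp add: Fhc_def Q2_def R2_def m2_def p)
      also have "\<dots> = (y * (u + v^c * y^c * (u + y * Ph p)), y * D2 p,
          y * (v * (1 + v^(c+1) * y^(c+1) * R2 p)))"
        unfolding l1 l2 l3 by (simp add: D2_def p)
      finally have fq: "f (u * y, y, v * y) = (y * (u + v^c * y^c * (u + y * Ph p)), y * D2 p,
          y * (v * (1 + v^(c+1) * y^(c+1) * R2 p)))" .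
      show ?case
      proof (intro impI)
        assume y0: "fst (snd p) \<noteq> 0"
        then have y0': "y \<noteq> 0" by (simp add: p)
        have D0: "D2 p \<noteq> 0" using elim(3) .
        have pc: "fst p = u" "fst (snd p) = y" "snd (snd p) = v" by (simp_all add: p)
        have gp: "g p = ((u + v^c * y^c * (u + y * Ph p)) / D2 p, y * D2 p,
            v * (1 + v^(c+1) * y^(c+1) * R2 p) / D2 p)" by (simp add: g_def pc)
        show "let q = f (fst p * fst (snd p), fst (snd p), snd (snd p) * fst (snd p)) in fst (snd q) \<noteq> 0 \<and>
          g p = (fst q / fst (snd q), fst (snd q), snd (snd q) / fst (snd q))"
          unfolding Let_def pc fq gp using y0' D0 by simp
      qed
    qed
    show ?thesis unfolding lift_chart2_def using hgg ev by (simp add: case_prod_unfold)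
  qed
  define \<alpha> where "\<alpha> = Ph 0"
  define h where "h p = shy \<alpha> (g (shy (-\<alpha>) p))" for p
  define Phs where "Phs p = Ph (shy (-\<alpha>) p)" for p
  define Q2s where "Q2s p = Q2 (shy (-\<alpha>) p)" for p
  define R2s where "R2s p = R2 (shy (-\<alpha>) p)" for p
  define D2s where "D2s p = D2 (shy (-\<alpha>) p)" for p
  have hs: "hgerm Phs" "hgerm Q2s" "hgerm R2s" "hgerm D2s"
    unfolding Phs_def Q2s_def R2s_def D2s_def using hgerm_shy Ph(1) hQ2 hR2 hD2 by auto
  have s0: "Phs 0 = \<alpha>" "Q2s 0 = 0" "D2s 0 = 1"
    by (simp_all add: Phs_def Q2s_def D2s_def \<alpha>_def Q20 D20)
  define P' where "P' p = (fst (snd p) * (Phs p - \<alpha>) + snd (snd p) * ((\<beta> + Q2s p) *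
      (- (fst p - \<alpha> * fst (snd p)) + \<alpha> * fst (snd p) * D2s p - fst p * (fst (snd p))^c * (snd (snd p))^c))) / D2s p" for p
  define Q' where "Q' p = snd (snd p) * (\<beta> + Q2s p)" for p
  define R' where "R' p = snd (snd p) * (fst (snd p) * R2s p - \<beta> - Q2s p) / D2s p" for p
  have mQ': "in_m Q'" unfolding in_m_def Q'_def by (simp add: hg hs zero_prod_def)
  have "hgerm R'" unfolding R'_def
    by (rule hgerm_divide) (intro hg hs, rule hs(4), simp add: s0)
  then have mR': "in_m R'" unfolding in_m_def R'_def by (simp add: zero_prod_def)
  have mP': "in_m2 P'"
  proof -
    have i1: "in_m (\<lambda>p. fst (snd p))" "in_m (\<lambda>p. snd (snd p))" "in_m (\<lambda>p. Phs p - \<alpha>)"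
      unfolding in_m_def using s0 by (simp_all add: hg hs zero_prod_def)
    have i2: "in_m (\<lambda>p. (\<beta> + Q2s p) *
      (- (fst p - \<alpha> * fst (snd p)) + \<alpha> * fst (snd p) * D2s p - fst p * (fst (snd p))^c * (snd (snd p))^c))"
      unfolding in_m_def by (simp add: hg hs zero_prod_def)
    have hi: "hgerm (\<lambda>p. inverse (D2s p))" using hgerm_inverse[OF hs(4)] s0 by simp
    have "in_m2 (\<lambda>p. inverse (D2s p) * (fst (snd p) * (Phs p - \<alpha>) + snd (snd p) * ((\<beta> + Q2s p) *
      (- (fst p - \<alpha> * fst (snd p)) + \<alpha> * fst (snd p) * D2s p - fst p * (fst (snd p))^c * (snd (snd p))^c))))"
      by (rule m2_hmult[OF hi m2_add[OF m2_mult[OF i1(1,3)] m2_mult[OF i1(2) i2]]])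
    then show ?thesis unfolding P'_def by (simp add: divide_inverse mult.commute)
  qed
  have evD2s: "eventually (\<lambda>p. D2s p \<noteq> 0) (nhds 0)"
    unfolding D2s_def using ev_transfer[OF isCont_shy shy_0 evD2] .
  have evh: "eventually (\<lambda>p. h p = (fst p + (fst (snd p))^c * (snd (snd p))^c * (fst p + P' p),
       fst (snd p) + (fst (snd p))^(c+1) * (snd (snd p))^c * Q' p,
       snd (snd p) + (fst (snd p))^c * (snd (snd p))^(c+1) * R' p)) (nhds 0)"
    using evD2s
  proof eventually_elim
    case (elim p)
    obtain x y z where p: "p = (x, y, z)" by (cases p)
    have Dp: "D2s p = 1 + z^(c+1) * y^c * (\<beta> + Q2s p)"
      by (simp add: D2s_def D2_def Q2s_def shy_def p)
    have hp: "h p = (((x - \<alpha> * y) + z^c * y^c * ((x - \<alpha> * y) + y * Phs p)) / D2s p + \<alpha> * (y * D2s p),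
        y * D2s p, z * (1 + z^(c+1) * y^(c+1) * R2s p) / D2s p)"
      by (simp add: h_def g_def shy_def Phs_def D2s_def R2s_def p)
    show ?case
      unfolding hp P'_def Q'_def R'_def
      using sp1[OF elim Dp, of x \<alpha> "Phs p"] sp2[of y z c \<beta> "Q2s p"] sp3[OF elim Dp, of "R2s p"] Dp
      by (simp add: p)
  qed
  have sc: "spinning_corner_form c c P' Q' R' h"
    unfolding spinning_corner_form_def
    using H(1) mP' mQ' mR' evh by (simp add: case_prod_unfold)
  have cj: "conj_to g h"
    unfolding conj_to_def
    by (intro exI[of _ "shy \<alpha>"] exI[of _ "shy (-\<alpha>)"] conjI loc_biholo_shy) (simp add: h_def)
  show ?thesis using lift sc cj unfolding is_spinning_corner_def by blast
qed

definition shz :: "complex \<Rightarrow> c3 \<Rightarrow> c3" where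
  "shz a p = (fst p + a * snd (snd p), fst (snd p), snd (snd p))"

lemma shz_inv[simp]: "shz (-a) (shz a p) = p" "shz a (shz (-a) p) = p"
  by (simp_all add: shz_def)

lemma shz_0[simp]: "shz a 0 = 0" by (simp add: shz_def zero_prod_def)

lemma isCont_shz: "isCont (shz a) x" unfolding shz_def by (intro continuous_intros)

lemma hgerm_shz: "hgerm F \<Longrightarrow> hgerm (\<lambda>p. F (shz a p))"
  unfolding shz_def by (rule hgerm_compose) (intro hg | simp)+

lemma hgerm_map_shz: "hgerm_map (shz a)"
  unfolding hgerm_map_def shz_def by (simp, intro conjI hg)

lemma loc_biholo_shz: "loc_biholo (shz a) (shz (-a))"
  by (simp add: loc_biholo_def hgerm_map_shz)

lemma k1: "u * z + z^c * (u * z + z^2 * Ph) = z * (u + z^c * (u + z * Ph))" for u z Ph :: complex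
  by (simp add: power2_eq_square distrib_left distrib_right mult_ac)
lemma k2: "(w + y0) * z + z^(c+1) * (0 + z * Qh) = z * ((w + y0) + z^(c+1) * Qh)" for w y0 z Qh :: complex
  by (simp add: distrib_left mult_ac)
lemma k3: "z + z^(c+2) * R = z * (1 + z^(c+1) * R)" for z R :: complex
  by (simp add: distrib_left mult_ac)
lemma hc1:
  fixes x z R Ph D \<alpha> :: complex
  assumes "D \<noteq> 0" "D = 1 + z^(c+1) * R"
  shows "((x - \<alpha> * z) + z^c * ((x - \<alpha> * z) + z * Ph)) / D + \<alpha> * (z * D) =
    x + z^c * (x + (z * (Ph - \<alpha>) + z * (R * (- (x - \<alpha> * z) + \<alpha> * z * D - x * z^c))) / D)"
proof -
  have "x + z^c * (x + (z * (Ph - \<alpha>) + z * (R * (- (x - \<alpha> * z) + \<alpha> * z * D - x * z^c))) / D)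
     = (x * D + z^c * (x * D + (z * (Ph - \<alpha>) + z * (R * (- (x - \<alpha> * z) + \<alpha> * z * D - x * z^c))))) / D"
    using assms(1) by (simp add: field_simps)
  also have "\<dots> = (((x - \<alpha> * z) + z^c * ((x - \<alpha> * z) + z * Ph)) + \<alpha> * (z * D) * D) / D"
    unfolding assms(2) by (simp add: algebra_simps)
  also have "\<dots> = ((x - \<alpha> * z) + z^c * ((x - \<alpha> * z) + z * Ph)) / D + \<alpha> * (z * D)"
    using assms(1) by (simp add: field_simps)
  finally show ?thesis by simp
qed
lemma hc2:
  fixes y y0 z R Qh D b :: complex
  assumes "D \<noteq> 0" "D = 1 + z^(c+1) * R"
  shows "((y + y0) + z^(c+1) * Qh) / D - y0 = y + z^(c+1) * (b + ((Qh - (y + y0) * R) / D - b))"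
proof -
  have "y + z^(c+1) * (b + ((Qh - (y + y0) * R) / D - b)) = (y * D + z^(c+1) * (Qh - (y + y0) * R)) / D"
    using assms(1) by (simp add: field_simps)
  also have "\<dots> = ((y + y0) + z^(c+1) * Qh - y0 * D) / D"
    unfolding assms(2) by (simp add: algebra_simps)
  also have "\<dots> = ((y + y0) + z^(c+1) * Qh) / D - y0"
    using assms(1) by (simp add: field_simps)
  finally show ?thesis by simp
qed
lemma hc3: "z * (1 + z^(c+1) * R) = z + z^(c+2) * R" for z R :: complex
  by (simp add: distrib_left mult_ac)

lemma chart3:
  assumes hc: "half_corner_form c \<beta> P Q R f" and b0: "\<beta> = 0"
  shows "\<exists>g. lift_chart3 y0 f g \<and> is_half_corner g"
proof -
  note H = hc_facts[OF hc]
  define m3 where "m3 p = (fst p * snd (snd p), (fst (snd p) + y0) * snd (snd p), snd (snd p))" for p :: c3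
  have cm3: "isCont m3 0" unfolding m3_def by (intro continuous_intros)
  have m30: "m3 0 = 0" by (simp add: m3_def zero_prod_def)
  have dv: "\<exists>A. hgerm A \<and> (\<forall>p. a (m3 p) = snd (snd p) * A p)" if ha: "hgerm a" "a 0 = 0" for a
  proof -
    obtain A where A: "hgerm A" "\<And>u w z. a (u * z, (w + y0) * z, z) = z * A (u, w, z)" using div3[OF ha] by blast
    show ?thesis using A by (intro exI[of _ A]) (simp add: m3_def)
  qed
  from m2_chart[OF H(2) cm3 m30 dv] obtain Ph where Ph: "hgerm Ph"
    "eventually (\<lambda>p. P (m3 p) = (snd (snd p))^2 * Ph p) (nhds 0)" by blast
  have hQ: "hgerm Q" "Q 0 = 0" using H(3) by (auto simp: in_m_def)
  obtain Qh where Qh: "hgerm Qh" "\<And>p. Q (m3 p) = snd (snd p) * Qh p" using dv[OF hQ] by blast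
  define R3 where "R3 p = R (m3 p)" for p
  have hR3: "hgerm R3" unfolding R3_def m3_def by (rule hgerm_compose[OF H(4)]) (intro hg | simp)+
  define D3 where "D3 p = 1 + (snd (snd p))^(c+1) * R3 p" for p
  have hD3: "hgerm D3" unfolding D3_def by (intro hg hR3)
  have D30: "D3 0 = 1" using H(1) by (simp add: D3_def)
  have evD3: "eventually (\<lambda>p. D3 p \<noteq> 0) (nhds 0)" using hgerm_ev_nonzero[OF hD3] D30 by simp
  define g where "g p = ((fst p + (snd (snd p))^c * (fst p + snd (snd p) * Ph p)) / D3 p,
      ((fst (snd p) + y0) + (snd (snd p))^(c+1) * Qh p) / D3 p - y0,
      snd (snd p) * D3 p)" for p
  have hgg: "hgerm_map g" unfolding hgerm_map_def g_def using D30
    by (simp add: hgerm_divide hg hD3 Qh(1) hR3 Ph(1))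
  have lift: "lift_chart3 y0 f g"
  proof -
    have ev: "eventually (\<lambda>p. snd (snd p) \<noteq> 0 \<longrightarrow>
        (let q = f (fst p * snd (snd p), (fst (snd p) + y0) * snd (snd p), snd (snd p)) in snd (snd q) \<noteq> 0 \<and>
          g p = (fst q / snd (snd q), fst (snd q) / snd (snd q) - y0, snd (snd q)))) (nhds 0)"
      using ev_transfer[OF cm3 m30 H(5)] Ph(2) evD3
    proof eventually_elim
      case (elim p)
      obtain u w z where p: "p = (u, w, z)" by (cases p)
      have m3p: "m3 p = (u * z, (w + y0) * z, z)" by (simp add: m3_def p)
      have Qp: "Q (u * z, (w + y0) * z, z) = z * Qh p" using Qh(2)[of p] unfolding m3p by (simp add: p)
      have "f (u * z, (w + y0) * z, z) = (u * z + z^c * (u * z + z^2 * Ph p), (w + y0) * z + z^(c+1) * (0 + z * Qh p),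
          z + z^(c+2) * R3 p)"
        using elim(1,2) Qp b0 unfolding m3p by (simp add: Fhc_def R3_def m3_def p)
      also have "\<dots> = (z * (u + z^c * (u + z * Ph p)), z * ((w + y0) + z^(c+1) * Qh p), z * D3 p)"
        unfolding k1 k2 k3 by (simp add: D3_def p)
      finally have fq: "f (u * z, (w + y0) * z, z) =
          (z * (u + z^c * (u + z * Ph p)), z * ((w + y0) + z^(c+1) * Qh p), z * D3 p)" .
      show ?case
      proof (intro impI)
        assume z0: "snd (snd p) \<noteq> 0"
        then have z0': "z \<noteq> 0" by (simp add: p)
        have D0: "D3 p \<noteq> 0" using elim(3) .
        have pc: "fst p = u" "fst (snd p) = w" "snd (snd p) = z" by (simp_all add: p)
        have gp: "g p = ((u + z^c * (u + z * Ph p)) / D3 p, ((w + y0) + z^(c+1) * Qh p) / D3 p - y0,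
            z * D3 p)" by (simp add: g_def pc)
        show "let q = f (fst p * snd (snd p), (fst (snd p) + y0) * snd (snd p), snd (snd p)) in snd (snd q) \<noteq> 0 \<and>
          g p = (fst q / snd (snd q), fst (snd q) / snd (snd q) - y0, snd (snd q))"
          unfolding Let_def pc fq gp using z0' D0 by simp
      qed
    qed
    show ?thesis unfolding lift_chart3_def using hgg ev by (simp add: case_prod_unfold)
  qed
  define \<alpha> where "\<alpha> = Ph 0"
  define h where "h p = shz \<alpha> (g (shz (-\<alpha>) p))" for p
  define Phs where "Phs p = Ph (shz (-\<alpha>) p)" for p
  define Qhs where "Qhs p = Qh (shz (-\<alpha>) p)" for p
  define R3s where "R3s p = R3 (shz (-\<alpha>) p)" for p
  define D3s where "D3s p = D3 (shz (-\<alpha>) p)" for p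
  have hs: "hgerm Phs" "hgerm Qhs" "hgerm R3s" "hgerm D3s"
    unfolding Phs_def Qhs_def R3s_def D3s_def using hgerm_shz Ph(1) Qh(1) hR3 hD3 by auto
  have s0: "Phs 0 = \<alpha>" "D3s 0 = 1"
    by (simp_all add: Phs_def D3s_def \<alpha>_def D30)
  define b' where "b' = Qhs 0 - y0 * R3s 0"
  define P' where "P' p = (snd (snd p) * (Phs p - \<alpha>) + snd (snd p) * (R3s p *
      (- (fst p - \<alpha> * snd (snd p)) + \<alpha> * snd (snd p) * D3s p - fst p * (snd (snd p))^c))) / D3s p" for p
  define Q' where "Q' p = (Qhs p - (fst (snd p) + y0) * R3s p) / D3s p - b'" for p
  have "hgerm Q'" unfolding Q'_def
    by (intro hgerm_diff hgerm_const, rule hgerm_divide) (intro hg hs, rule hs(4), simp add: s0)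
  then have mQ': "in_m Q'" unfolding in_m_def Q'_def b'_def using s0 by (simp add: zero_prod_def)
  have mP': "in_m2 P'"
  proof -
    have i1: "in_m (\<lambda>p. snd (snd p))" "in_m (\<lambda>p. Phs p - \<alpha>)"
      unfolding in_m_def using s0 by (simp_all add: hg hs zero_prod_def)
    have i2: "in_m (\<lambda>p. R3s p * (- (fst p - \<alpha> * snd (snd p)) + \<alpha> * snd (snd p) * D3s p - fst p * (snd (snd p))^c))"
      unfolding in_m_def by (simp add: hg hs zero_prod_def)
    have hi: "hgerm (\<lambda>p. inverse (D3s p))" using hgerm_inverse[OF hs(4)] s0 by simp
    have "in_m2 (\<lambda>p. inverse (D3s p) * (snd (snd p) * (Phs p - \<alpha>) + snd (snd p) * (R3s p *
      (- (fst p - \<alpha> * snd (snd p)) + \<alpha> * snd (snd p) * D3s p - fst p * (snd (snd p))^c))))"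
      by (rule m2_hmult[OF hi m2_add[OF m2_mult[OF i1(1,2)] m2_mult[OF i1(1) i2]]])
    then show ?thesis unfolding P'_def by (simp add: divide_inverse mult.commute)
  qed
  have evD3s: "eventually (\<lambda>p. D3s p \<noteq> 0) (nhds 0)"
    unfolding D3s_def using ev_transfer[OF isCont_shz shz_0 evD3] .
  have evh: "eventually (\<lambda>p. h p = (fst p + (snd (snd p))^c * (fst p + P' p),
       fst (snd p) + (snd (snd p))^(c+1) * (b' + Q' p),
       snd (snd p) + (snd (snd p))^(c+2) * R3s p)) (nhds 0)"
    using evD3s
  proof eventually_elim
    case (elim p)
    obtain x y z where p: "p = (x, y, z)" by (cases p)
    have Dp: "D3s p = 1 + z^(c+1) * R3s p"
      by (simp add: D3s_def D3_def R3s_def shz_def p)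
    have hp: "h p = (((x - \<alpha> * z) + z^c * ((x - \<alpha> * z) + z * Phs p)) / D3s p + \<alpha> * (z * D3s p),
        ((y + y0) + z^(c+1) * Qhs p) / D3s p - y0, z * (1 + z^(c+1) * R3s p))"
      by (simp add: h_def g_def shz_def Phs_def D3s_def R3s_def Qhs_def D3_def p)
    show ?case
      unfolding hp P'_def Q'_def
      using hc1[OF elim Dp, of x \<alpha> "Phs p"] hc2[OF elim Dp, of y y0 "Qhs p" b'] hc3[of z c "R3s p"]
      by (simp add: p)
  qed
  have sc: "half_corner_form c b' P' Q' R3s h"
    unfolding half_corner_form_def
    using H(1) mP' mQ' hs(3) evh by (simp add: case_prod_unfold)
  have cj: "conj_to g h"
    unfolding conj_to_def
    by (intro exI[of _ "shz \<alpha>"] exI[of _ "shz (-\<alpha>)"] conjI loc_biholo_shz) (simp add: h_def)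
  show ?thesis using lift sc cj unfolding is_half_corner_def by blast
qed

theorem proposition3p22:
  fixes f :: "c3 \<Rightarrow> c3" and c :: nat and \<beta> :: complex and P Q R :: "c3 \<Rightarrow> complex"
  assumes "half_corner_form c \<beta> P Q R f"
  shows "{v. \<exists>lam. singular_dir f c v lam} =
           cline (1, 0, 0) \<union> cline (0, 1, 0) \<union> {v. \<beta> = 0 \<and> (\<exists>y0. v \<in> cline (0, y0, 1))}
       \<and> exceptional_dir (1, 0, 0) \<and> exceptional_dir (0, 1, 0)
       \<and> (\<beta> = 0 \<longrightarrow> (\<forall>y0. \<not> exceptional_dir (0, y0, 1) \<and> degenerate_dir f c (0, y0, 1)))
       \<and> (\<exists>g. lift_chart1 f g \<and> is_simple_corner g)
       \<and> (\<exists>g. lift_chart2 f g \<and> is_spinning_corner g)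
       \<and> (\<beta> = 0 \<longrightarrow> (\<forall>y0. \<exists>g. lift_chart3 y0 f g \<and> is_half_corner g))"
  proof -
  show ?thesis
    using sing_set[OF assms] sing_degen[OF assms] chart1[OF assms] chart2[OF assms] chart3[OF assms]
    by (simp add: exceptional_dir_def zero_prod_def)
qed

end
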